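(* In the setting of problem (CP1) and the prox-ADC method described in the context, suppose Assumptions 1–6 hold, the generated sequence $\{x^k\}$ is bounded, and $\partial^\infty_Af_p(x)=\{0\}$ for every $x\in\bigcap_{p=1}^m\operatorname{dom}F_p$ and every $p\in I_2$. Then for any $\bar\eta>0$, $\bar\beta>0$, $\bar k\in\mathbb{N}$ there is an integer $k_0\ge\bar k$ with $\max_{1\le p\le m}\sum_{k'\ge k_0}\widehat\alpha_p^{k'}+\epsilon_{k_0}\le\bar\beta$, $\delta_{k_0}/(\lambda+\ell_{k_0})\le\bar\beta$ and $\delta_{k_0}\le\bar\eta$; consequently $x^{k_0,i_{k_0}+1}$ is a $(\bar\eta\max\{1,\sqrt{2m}D\},\bar\beta,\bar k)$-weakly A-stationary point of (CP1), where $D=\sup_{k\in\mathbb{N}}\sup_{y\in Y^k(x^{k+1})}\|y\|$.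
   Context: Problem (CP1): integers $0\le m_1\le m$; $f_p:\mathbb{R}^n\to\mathbb{R}$; $\varphi_p:\mathbb{R}\to\mathbb{R}$ convex for $p\le m_1$; $\varphi_p=\delta_{(-\infty,0]}$ for $p>m_1$; $F_p=\varphi_p\circ f_p$. $I_1=\{p:\varphi_p$ nondecreasing$\}$, $I_2$ its complement. Monotonic decomposition $\varphi_p=\varphi_p^\uparrow+\varphi^\downarrow_p$: $(\varphi_p,0)$ if nondecreasing; $(0,\varphi_p)$ if nonincreasing; otherwise with minimizer $z^*$, $\varphi^\uparrow_p=\varphi_p(z^* )$ on $z\le z^*$, $\varphi_p$ on $z>z^*$; $\varphi_p^\downarrow=\varphi_p-\varphi_p(z^* )$ on $z\le z^*$, $0$ on $z>z^*$. Assumption 1: $f^k_p=g^k_p-h^k_p$ ($g^k_p,h^k_p:\mathbb{R}^n\to\mathbb{R}$ convex), $f_p^k$ epi-converges to $f_p$; $-\infty<\liminf_{x'\to x,k\to\infty}f_p^k(x')\le\limsup_{x'\to x,k\to\infty}f_p^k(x')<\infty$ $\forall x$; $\varphi_p\circ f_p^k$ epi-converges to $\varphi_p\circ f_p$. Assumption 2: $X^k=\{x:f^k_p(x)\le0,p>m_1\}$, $\alpha_p^k=\sup_{X^k}[f^{k+1}_p-f^k_p]_+$; there are $x^0$ and nonnegative $\widehat\alpha_p^k\ge\alpha_p^k$ ($p>m_1$), $\sum_{k'}\widehat\alpha_p^{k'}<\infty$, $f^0_p(x^0)\le-\sum_{k'}\widehat\alpha_p^{k'}$; $\widehat\alpha_p^k=0$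 for $p\le m_1$. Assumption 3: $\exists\ell_k>0$ with $\min\{\mathbb H(\partial g_p^k(x),\partial g_p^k(x')),\mathbb H(\partial h_p^k(x),\partial h_p^k(x'))\}\le\ell_k\|x-x'\|$ $\forall x,x',p$. Assumption 4: each $\sum_{p\le m_1}\varphi_p(f^k_p)+\sum_{p>m_1}\delta_{(-\infty,0]}(f_p^k)$ is level-bounded. Assumption 5: for every $\bar x\in\bigcap_p\operatorname{dom}F_p$, if $0=\sum_py_pv_p$ with $(y_p,v_p)\in(\bigcup\{\mathcal N_{\operatorname{dom}\varphi_p}(t):t\in T_p(\bar x)\}\times\operatorname{con}\partial_Af_p(\bar x))\cup(\mathbb{R}\times[\partial_A^\infty f_p(\bar x)\setminus\{0\}])$ for each $p$, then all $y_p=0$; $T_p(x)=\{t:\exists$ infinite $N$, $x^k\to x$, $f_p^k(x^k)\to_Nt\}$; $\partial_Af_p(\bar x)=\bigcup_{x^k\to\bar x}\operatorname{Lim\,sup}_k[\partial g^k_p(x^k)-\partial h^k_p(x^k)]$, $\partial^\infty_Af_p(\bar x)=\bigcup_{x^k\to\bar x}\operatorname{Lim\,sup}_k^\infty[\partial g^k_p(x^k)-\partial h^k_p(x^k)]$ (outer limit $\{u:\exists$ infinite $N$, $u^k\in C^k$, $u^k\to_Nu\}$, horizon outer limit $\{0\}\cup\{u:\exists$ infinite $N,\lambda_k\downarrow0,u^k\in C^k,\lambda_ku^k\to_Nu\}$). Method: $\lambda>0$; positive $\epsilon_k\downarrow0,\delta_k\downarrow0$ with $\delta_k/(\lambda+\ell_k)\downarrow0$;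 $\sigma^k_p=\sum_{k'\ge k}\widehat\alpha^{k'}_p$; at $y$ pick $a_p\in\partial h^k_p(y)$, $b_p\in\partial g^k_p(y)$; $f^{k,\mathrm{up}}_p(x;y)=g^k_p(x)-h^k_p(y)-a_p^\top(x-y)+\sigma^k_p$, $f^{k,\mathrm{lo}}_p(x;y)=g^k_p(y)+b_p^\top(x-y)-h^k_p(x)$, $\widehat F^k_p(x;y)=\varphi^\uparrow_p(f^{k,\mathrm{up}}_p(x;y))+\varphi^\downarrow_p(f^{k,\mathrm{lo}}_p(x;y))$. Subproblem at $y$: $\operatorname{argmin}\{\sum_{p\le m_1}\widehat F_p^k(x;y)+\frac\lambda2\|x-y\|^2:f^{k,\mathrm{up}}_p(x;y)\le0,p>m_1\}$. $x^{k,0}=x^k$, $x^{k,i+1}$ = subproblem solution at $x^{k,i}$; $i_k$ = first $i$ with $f_p^{k,\mathrm{up}}(x^{k,i+1};x^{k,i})\le f_p^k(x^{k,i+1})+\sigma^k_p+\epsilon_k$ $\forall p$, $f_p^{k,\mathrm{lo}}(x^{k,i+1};x^{k,i})\ge f^k_p(x^{k,i+1})-\epsilon_k$ for $p\in I_2$, $\|x^{k,i+1}-x^{k,i}\|\le\delta_k/(\lambda+\ell_k)$; $x^{k+1}=x^{k,i_k}$. Assumption 6: for all $k$ and every $(x',x'')$ with $x''$ the subproblem solution at $y=x'$, if $y_p\in\mathcal N_{(-\infty,0]}(f^{k,\mathrm{up}}_p(x'';x'))$ ($p>m_1$) and $0\in\sum_{p>m_1}y_p\partial f^{k,\mathrm{up}}_p(x'';x')$,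 then all $y_p=0$. $Y^k(x^{k+1})$: the set of $(y_{1,1},y_{1,2},\dots,y_{m,1},y_{m,2})$ with $0\in\sum_p[y_{p,1}\partial f^{k,\mathrm{up}}_p(x^{k,i_k+1};x^{k,i_k})+y_{p,2}\partial f^{k,\mathrm{lo}}_p(x^{k,i_k+1};x^{k,i_k})]+\lambda(x^{k,i_k+1}-x^{k,i_k})$, $y_{p,1}\in\partial\varphi^\uparrow_p(f^{k,\mathrm{up}}_p(x^{k,i_k+1};x^{k,i_k}))$, $y_{p,2}\in\partial\varphi^\downarrow_p(f^{k,\mathrm{lo}}_p(x^{k,i_k+1};x^{k,i_k}))$. For convex $\psi$, $\partial^\beta\psi(x)=\bigcup\{\partial\psi(z):\|z-x\|\le\beta\}$. $x$ is $(\bar\eta,\bar\beta,\bar k)$-weakly A-stationary if $\exists k\ge\bar k$ with $\operatorname{dist}\big(0,\sum_p\bigcup\{y_{p,1}[\partial^{\bar\beta}g^k_p(x)-\partial^{\bar\beta}h^k_p(x)]+y_{p,2}[\partial^{\bar\beta}g^k_p(x)-\partial^{\bar\beta}h^k_p(x)]:y_{p,1}\in\partial^{\bar\beta}\varphi_p^\uparrow(f^k_p(x)),y_{p,2}\in\partial^{\bar\beta}\varphi_p^\downarrow(f^k_p(x))\}\big)\le\bar\eta$. *)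

theory Defs
  imports "HOL-Analysis.Analysis"
begin

definition ind_nonpos :: "real \<Rightarrow> ereal" where
  "ind_nonpos z = (if z \<le> 0 then 0 else \<infinity>)"

text \<open>The outer functions of (CP1): phi_p for p \<le> m1 (real-valued, convex), indicator for p > m1.\<close>
definition Phi :: "nat \<Rightarrow> (nat \<Rightarrow> real \<Rightarrow> real) \<Rightarrow> nat \<Rightarrow> real \<Rightarrow> ereal" where
  "Phi m1 \<phi> p = (if p \<le> m1 then (\<lambda>z. ereal (\<phi> p z)) else ind_nonpos)"

definition nondecr :: "(real \<Rightarrow> ereal) \<Rightarrow> bool" where
  "nondecr \<psi> \<longleftrightarrow> (\<forall>s t. s \<le> t \<longrightarrow> \<psi> s \<le> \<psi> t)"

definition nonincr :: "(real \<Rightarrow> ereal) \<Rightarrow> bool" where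
  "nonincr \<psi> \<longleftrightarrow> (\<forall>s t. s \<le> t \<longrightarrow> \<psi> t \<le> \<psi> s)"

definition minimizer :: "(real \<Rightarrow> ereal) \<Rightarrow> real" where
  "minimizer \<psi> = (SOME z. \<forall>w. \<psi> z \<le> \<psi> w)"

text \<open>Monotonic decomposition phi = phi_up + phi_down.\<close>
definition phi_up :: "(real \<Rightarrow> ereal) \<Rightarrow> real \<Rightarrow> ereal" where
  "phi_up \<psi> = (if nondecr \<psi> then \<psi> else if nonincr \<psi> then (\<lambda>_. 0)
     else (\<lambda>z. if z \<le> minimizer \<psi> then \<psi> (minimizer \<psi>) else \<psi> z))"

definition phi_down :: "(real \<Rightarrow> ereal) \<Rightarrow> real \<Rightarrow> ereal" where
  "phi_down \<psi> = (if nondecr \<psi> then (\<lambda>_. 0) else if nonincr \<psi> then \<psi>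
     else (\<lambda>z. if z \<le> minimizer \<psi> then \<psi> z - \<psi> (minimizer \<psi>) else 0))"

definition esubdiff :: "(real \<Rightarrow> ereal) \<Rightarrow> real \<Rightarrow> real set" where
  "esubdiff \<psi> t = {y. \<psi> t \<noteq> \<infinity> \<and> (\<forall>s. \<psi> t + ereal (y * (s - t)) \<le> \<psi> s)}"

definition esubdiff_beta :: "(real \<Rightarrow> ereal) \<Rightarrow> real \<Rightarrow> real \<Rightarrow> real set" where
  "esubdiff_beta \<psi> \<beta> t = (\<Union>z\<in>{z. \<bar>z - t\<bar> \<le> \<beta>}. esubdiff \<psi> z)"

definition csubdiff :: "('a::real_inner \<Rightarrow> real) \<Rightarrow> 'a \<Rightarrow> 'a set" where
  "csubdiff f x = {v. \<forall>z. f x + inner v (z - x) \<le> f z}"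

definition csubdiff_beta :: "('a::real_inner \<Rightarrow> real) \<Rightarrow> real \<Rightarrow> 'a \<Rightarrow> 'a set" where
  "csubdiff_beta f \<beta> x = (\<Union>z\<in>{z. norm (z - x) \<le> \<beta>}. csubdiff f z)"

definition normal_cone :: "real set \<Rightarrow> real \<Rightarrow> real set" where
  "normal_cone C t = (if t \<in> C then {y. \<forall>s\<in>C. y * (s - t) \<le> 0} else {})"

definition haus :: "'a::metric_space set \<Rightarrow> 'a set \<Rightarrow> ereal" where
  "haus A B = max (SUP a\<in>A. ereal (infdist a B)) (SUP b\<in>B. ereal (infdist b A))"

definition msum :: "nat set \<Rightarrow> (nat \<Rightarrow> 'a::comm_monoid_add set) \<Rightarrow> 'a set" where
  "msum P S = {sum v P | v. \<forall>p\<in>P. v p \<in> S p}"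

definition mdiff :: "'a::ab_group_add set \<Rightarrow> 'a set \<Rightarrow> 'a set" where
  "mdiff A B = {a - b | a b. a \<in> A \<and> b \<in> B}"

definition mscale :: "real \<Rightarrow> 'a::real_vector set \<Rightarrow> 'a set" where
  "mscale c A = (\<lambda>v. c *\<^sub>R v) ` A"

definition dist0 :: "'a::real_normed_vector set \<Rightarrow> ereal" where
  "dist0 S = (if S = {} then \<infinity> else ereal (infdist 0 S))"

definition epi_conv :: "(nat \<Rightarrow> 'a::metric_space \<Rightarrow> ereal) \<Rightarrow> ('a \<Rightarrow> ereal) \<Rightarrow> bool" where
  "epi_conv F F0 \<longleftrightarrow> (\<forall>x.
      (\<forall>xs. xs \<longlonglongrightarrow> x \<longrightarrow> F0 x \<le> liminf (\<lambda>k. F k (xs k))) \<and>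
      (\<exists>xs. xs \<longlonglongrightarrow> x \<and> limsup (\<lambda>k. F k (xs k)) \<le> F0 x))"

definition level_bounded :: "('a::metric_space \<Rightarrow> ereal) \<Rightarrow> bool" where
  "level_bounded F \<longleftrightarrow> (\<forall>\<alpha>::real. bounded {x. F x \<le> ereal \<alpha>})"

definition outer_limit :: "(nat \<Rightarrow> 'a::real_normed_vector set) \<Rightarrow> 'a set" where
  "outer_limit C = {u. \<exists>r uk. strict_mono r \<and> (\<forall>j. uk j \<in> C (r j)) \<and> uk \<longlonglongrightarrow> u}"

definition horizon_outer_limit :: "(nat \<Rightarrow> 'a::real_normed_vector set) \<Rightarrow> 'a set" where
  "horizon_outer_limit C = {0} \<union> {u. \<exists>r lam uk. strict_mono r \<and> (\<forall>j. lam j > 0) \<and> decseq lam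
      \<and> lam \<longlonglongrightarrow> 0 \<and> (\<forall>j. uk j \<in> C (r j)) \<and> (\<lambda>j. lam j *\<^sub>R uk j) \<longlonglongrightarrow> u}"

section \<open>The problem data (CP1)\<close>

text \<open>g, h :: k p x;  the DC approximation f^k_p = g^k_p - h^k_p.\<close>
definition fk :: "(nat \<Rightarrow> nat \<Rightarrow> 'a \<Rightarrow> real) \<Rightarrow> (nat \<Rightarrow> nat \<Rightarrow> 'a \<Rightarrow> real) \<Rightarrow> nat \<Rightarrow> nat \<Rightarrow> 'a \<Rightarrow> real" where
  "fk g h k p x = g k p x - h k p x"

definition domF :: "(nat \<Rightarrow> real \<Rightarrow> ereal) \<Rightarrow> (nat \<Rightarrow> 'a \<Rightarrow> real) \<Rightarrow> nat \<Rightarrow> 'a set" where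
  "domF Ph f p = {x. Ph p (f p x) < \<infinity>}"

definition I1 :: "nat \<Rightarrow> (nat \<Rightarrow> real \<Rightarrow> ereal) \<Rightarrow> nat set" where
  "I1 m Ph = {p\<in>{1..m}. nondecr (Ph p)}"

definition I2 :: "nat \<Rightarrow> (nat \<Rightarrow> real \<Rightarrow> ereal) \<Rightarrow> nat set" where
  "I2 m Ph = {1..m} - I1 m Ph"

definition Tset :: "(nat \<Rightarrow> nat \<Rightarrow> 'a::real_normed_vector \<Rightarrow> real) \<Rightarrow> (nat \<Rightarrow> nat \<Rightarrow> 'a \<Rightarrow> real) \<Rightarrow> nat \<Rightarrow> 'a \<Rightarrow> real set" where
  "Tset g h p x = {t. \<exists>r xs. strict_mono r \<and> xs \<longlonglongrightarrow> x \<and> (\<lambda>j. fk g h (r j) p (xs (r j))) \<longlonglongrightarrow> t}"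

definition subdiff_A :: "(nat \<Rightarrow> nat \<Rightarrow> 'a::real_inner \<Rightarrow> real) \<Rightarrow> (nat \<Rightarrow> nat \<Rightarrow> 'a \<Rightarrow> real) \<Rightarrow> nat \<Rightarrow> 'a \<Rightarrow> 'a set" where
  "subdiff_A g h p x = (\<Union>xs\<in>{xs. xs \<longlonglongrightarrow> x}.
     outer_limit (\<lambda>k. mdiff (csubdiff (g k p) (xs k)) (csubdiff (h k p) (xs k))))"

definition hsubdiff_A :: "(nat \<Rightarrow> nat \<Rightarrow> 'a::real_inner \<Rightarrow> real) \<Rightarrow> (nat \<Rightarrow> nat \<Rightarrow> 'a \<Rightarrow> real) \<Rightarrow> nat \<Rightarrow> 'a \<Rightarrow> 'a set" where
  "hsubdiff_A g h p x = (\<Union>xs\<in>{xs. xs \<longlonglongrightarrow> x}.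
     horizon_outer_limit (\<lambda>k. mdiff (csubdiff (g k p) (xs k)) (csubdiff (h k p) (xs k))))"

definition assumption1 :: "nat \<Rightarrow> (nat \<Rightarrow> real \<Rightarrow> ereal) \<Rightarrow> (nat \<Rightarrow> 'a::euclidean_space \<Rightarrow> real)
    \<Rightarrow> (nat \<Rightarrow> nat \<Rightarrow> 'a \<Rightarrow> real) \<Rightarrow> (nat \<Rightarrow> nat \<Rightarrow> 'a \<Rightarrow> real) \<Rightarrow> bool" where
  "assumption1 m Ph f g h \<longleftrightarrow> (\<forall>p\<in>{1..m}.
      (\<forall>k. convex_on UNIV (g k p) \<and> convex_on UNIV (h k p)) \<and>
      epi_conv (\<lambda>k x. ereal (fk g h k p x)) (\<lambda>x. ereal (f p x)) \<and>
      (\<forall>x. - \<infinity> < Liminf (nhds x \<times>\<^sub>F sequentially) (\<lambda>(x', k). ereal (fk g h k p x'))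
         \<and> Liminf (nhds x \<times>\<^sub>F sequentially) (\<lambda>(x', k). ereal (fk g h k p x'))
             \<le> Limsup (nhds x \<times>\<^sub>F sequentially) (\<lambda>(x', k). ereal (fk g h k p x'))
         \<and> Limsup (nhds x \<times>\<^sub>F sequentially) (\<lambda>(x', k). ereal (fk g h k p x')) < \<infinity>) \<and>
      epi_conv (\<lambda>k x. Ph p (fk g h k p x)) (\<lambda>x. Ph p (f p x)))"

definition Xk :: "nat \<Rightarrow> nat \<Rightarrow> (nat \<Rightarrow> nat \<Rightarrow> 'a \<Rightarrow> real) \<Rightarrow> (nat \<Rightarrow> nat \<Rightarrow> 'a \<Rightarrow> real) \<Rightarrow> nat \<Rightarrow> 'a set" where
  "Xk m1 m g h k = {x. \<forall>p\<in>{m1<..m}. fk g h k p x \<le> 0}"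

text \<open>alpha_hat p k; x0 is the initial point of the method.\<close>
definition assumption2 :: "nat \<Rightarrow> nat \<Rightarrow> (nat \<Rightarrow> nat \<Rightarrow> 'a \<Rightarrow> real) \<Rightarrow> (nat \<Rightarrow> nat \<Rightarrow> 'a \<Rightarrow> real)
    \<Rightarrow> (nat \<Rightarrow> nat \<Rightarrow> real) \<Rightarrow> 'a \<Rightarrow> bool" where
  "assumption2 m1 m g h \<alpha>h x0 \<longleftrightarrow>
     (\<forall>p\<in>{m1<..m}. (\<forall>k. 0 \<le> \<alpha>h p k \<and>
         (SUP x\<in>Xk m1 m g h k. ereal (max 0 (fk g h (Suc k) p x - fk g h k p x))) \<le> ereal (\<alpha>h p k))
       \<and> summable (\<alpha>h p) \<and> fk g h 0 p x0 \<le> - suminf (\<alpha>h p)) \<and>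
     (\<forall>p\<in>{1..m1}. \<forall>k. \<alpha>h p k = 0)"

definition assumption3 :: "nat \<Rightarrow> (nat \<Rightarrow> nat \<Rightarrow> 'a::real_inner \<Rightarrow> real) \<Rightarrow> (nat \<Rightarrow> nat \<Rightarrow> 'a \<Rightarrow> real)
    \<Rightarrow> (nat \<Rightarrow> real) \<Rightarrow> bool" where
  "assumption3 m g h ell \<longleftrightarrow> (\<forall>k. ell k > 0 \<and> (\<forall>x x'. \<forall>p\<in>{1..m}.
      min (haus (csubdiff (g k p) x) (csubdiff (g k p) x'))
          (haus (csubdiff (h k p) x) (csubdiff (h k p) x')) \<le> ereal (ell k * norm (x - x'))))"

definition assumption4 :: "nat \<Rightarrow> (nat \<Rightarrow> real \<Rightarrow> ereal) \<Rightarrow> (nat \<Rightarrow> nat \<Rightarrow> 'a::euclidean_space \<Rightarrow> real)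
    \<Rightarrow> (nat \<Rightarrow> nat \<Rightarrow> 'a \<Rightarrow> real) \<Rightarrow> bool" where
  "assumption4 m Ph g h \<longleftrightarrow> (\<forall>k. level_bounded (\<lambda>x. \<Sum>p\<in>{1..m}. Ph p (fk g h k p x)))"

definition assumption5 :: "nat \<Rightarrow> (nat \<Rightarrow> real \<Rightarrow> ereal) \<Rightarrow> (nat \<Rightarrow> 'a::euclidean_space \<Rightarrow> real)
    \<Rightarrow> (nat \<Rightarrow> nat \<Rightarrow> 'a \<Rightarrow> real) \<Rightarrow> (nat \<Rightarrow> nat \<Rightarrow> 'a \<Rightarrow> real) \<Rightarrow> bool" where
  "assumption5 m Ph f g h \<longleftrightarrow> (\<forall>xb \<in> (\<Inter>p\<in>{1..m}. domF Ph f p).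
     \<forall>(y::nat \<Rightarrow> real) (v::nat \<Rightarrow> 'a).
       (\<forall>p\<in>{1..m}. (y p, v p) \<in>
          ((\<Union>t\<in>Tset g h p xb. normal_cone {z. Ph p z < \<infinity>} t) \<times> (convex hull (subdiff_A g h p xb)))
          \<union> (UNIV \<times> (hsubdiff_A g h p xb - {0})))
       \<and> (\<Sum>p\<in>{1..m}. y p *\<^sub>R v p) = 0
       \<longrightarrow> (\<forall>p\<in>{1..m}. y p = 0))"

section \<open>The prox-ADC method\<close>

definition sigma :: "(nat \<Rightarrow> nat \<Rightarrow> real) \<Rightarrow> nat \<Rightarrow> nat \<Rightarrow> real" where
  "sigma \<alpha>h k p = (\<Sum>j. \<alpha>h p (j + k))"

text \<open>a k p y \<in> \<partial>h^k_p(y), b k p y \<in> \<partial>g^k_p(y) are the subgradients picked at y.\<close>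
definition f_up :: "(nat \<Rightarrow> nat \<Rightarrow> 'a::real_inner \<Rightarrow> real) \<Rightarrow> (nat \<Rightarrow> nat \<Rightarrow> 'a \<Rightarrow> real) \<Rightarrow> (nat \<Rightarrow> nat \<Rightarrow> 'a \<Rightarrow> 'a)
    \<Rightarrow> (nat \<Rightarrow> nat \<Rightarrow> real) \<Rightarrow> nat \<Rightarrow> nat \<Rightarrow> 'a \<Rightarrow> 'a \<Rightarrow> real" where
  "f_up g h a \<alpha>h k p x y = g k p x - h k p y - inner (a k p y) (x - y) + sigma \<alpha>h k p"

definition f_lo :: "(nat \<Rightarrow> nat \<Rightarrow> 'a::real_inner \<Rightarrow> real) \<Rightarrow> (nat \<Rightarrow> nat \<Rightarrow> 'a \<Rightarrow> real) \<Rightarrow> (nat \<Rightarrow> nat \<Rightarrow> 'a \<Rightarrow> 'a)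
    \<Rightarrow> nat \<Rightarrow> nat \<Rightarrow> 'a \<Rightarrow> 'a \<Rightarrow> real" where
  "f_lo g h b k p x y = g k p y + inner (b k p y) (x - y) - h k p x"

text \<open>Subdifferentials (in x) of f_up(.;y) (convex) and f_lo(.;y) (concave).\<close>
definition df_up :: "(nat \<Rightarrow> nat \<Rightarrow> 'a::real_inner \<Rightarrow> real) \<Rightarrow> (nat \<Rightarrow> nat \<Rightarrow> 'a \<Rightarrow> 'a) \<Rightarrow> nat \<Rightarrow> nat \<Rightarrow> 'a \<Rightarrow> 'a \<Rightarrow> 'a set" where
  "df_up g a k p x y = (\<lambda>u. u - a k p y) ` csubdiff (g k p) x"

definition df_lo :: "(nat \<Rightarrow> nat \<Rightarrow> 'a::real_inner \<Rightarrow> real) \<Rightarrow> (nat \<Rightarrow> nat \<Rightarrow> 'a \<Rightarrow> 'a) \<Rightarrow> nat \<Rightarrow> nat \<Rightarrow> 'a \<Rightarrow> 'a \<Rightarrow> 'a set" where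
  "df_lo h b k p x y = (\<lambda>w. b k p y - w) ` csubdiff (h k p) x"

definition Fhat :: "(nat \<Rightarrow> real \<Rightarrow> ereal) \<Rightarrow> (nat \<Rightarrow> nat \<Rightarrow> 'a::real_inner \<Rightarrow> real) \<Rightarrow> (nat \<Rightarrow> nat \<Rightarrow> 'a \<Rightarrow> real)
    \<Rightarrow> (nat \<Rightarrow> nat \<Rightarrow> 'a \<Rightarrow> 'a) \<Rightarrow> (nat \<Rightarrow> nat \<Rightarrow> 'a \<Rightarrow> 'a) \<Rightarrow> (nat \<Rightarrow> nat \<Rightarrow> real) \<Rightarrow> nat \<Rightarrow> nat \<Rightarrow> 'a \<Rightarrow> 'a \<Rightarrow> ereal" where
  "Fhat Ph g h a b \<alpha>h k p x y =
     phi_up (Ph p) (f_up g h a \<alpha>h k p x y) + phi_down (Ph p) (f_lo g h b k p x y)"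

definition is_subsol :: "nat \<Rightarrow> nat \<Rightarrow> (nat \<Rightarrow> real \<Rightarrow> ereal) \<Rightarrow> (nat \<Rightarrow> nat \<Rightarrow> 'a::real_inner \<Rightarrow> real) \<Rightarrow> (nat \<Rightarrow> nat \<Rightarrow> 'a \<Rightarrow> real)
    \<Rightarrow> (nat \<Rightarrow> nat \<Rightarrow> 'a \<Rightarrow> 'a) \<Rightarrow> (nat \<Rightarrow> nat \<Rightarrow> 'a \<Rightarrow> 'a) \<Rightarrow> (nat \<Rightarrow> nat \<Rightarrow> real) \<Rightarrow> real \<Rightarrow> nat \<Rightarrow> 'a \<Rightarrow> 'a \<Rightarrow> bool" where
  "is_subsol m1 m Ph g h a b \<alpha>h lam k y x'' \<longleftrightarrow>
     (\<forall>p\<in>{m1<..m}. f_up g h a \<alpha>h k p x'' y \<le> 0) \<and>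
     (\<forall>x. (\<forall>p\<in>{m1<..m}. f_up g h a \<alpha>h k p x y \<le> 0) \<longrightarrow>
        (\<Sum>p\<in>{1..m1}. Fhat Ph g h a b \<alpha>h k p x'' y) + ereal (lam / 2 * (norm (x'' - y))\<^sup>2)
        \<le> (\<Sum>p\<in>{1..m1}. Fhat Ph g h a b \<alpha>h k p x y) + ereal (lam / 2 * (norm (x - y))\<^sup>2))"

text \<open>Stopping test of the inner loop at inner index i (compares x^{k,i+1} with x^{k,i}).\<close>
definition inner_stop :: "nat \<Rightarrow> (nat \<Rightarrow> real \<Rightarrow> ereal) \<Rightarrow> (nat \<Rightarrow> nat \<Rightarrow> 'a::real_inner \<Rightarrow> real) \<Rightarrow> (nat \<Rightarrow> nat \<Rightarrow> 'a \<Rightarrow> real)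
    \<Rightarrow> (nat \<Rightarrow> nat \<Rightarrow> 'a \<Rightarrow> 'a) \<Rightarrow> (nat \<Rightarrow> nat \<Rightarrow> 'a \<Rightarrow> 'a) \<Rightarrow> (nat \<Rightarrow> nat \<Rightarrow> real) \<Rightarrow> real
    \<Rightarrow> (nat \<Rightarrow> real) \<Rightarrow> (nat \<Rightarrow> real) \<Rightarrow> (nat \<Rightarrow> real) \<Rightarrow> (nat \<Rightarrow> nat \<Rightarrow> 'a) \<Rightarrow> nat \<Rightarrow> nat \<Rightarrow> bool" where
  "inner_stop m Ph g h a b \<alpha>h lam \<epsilon> \<delta> ell xi k i \<longleftrightarrow>
     (\<forall>p\<in>{1..m}. f_up g h a \<alpha>h k p (xi k (Suc i)) (xi k i)
                   \<le> fk g h k p (xi k (Suc i)) + sigma \<alpha>h k p + \<epsilon> k) \<and>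
     (\<forall>p\<in>I2 m Ph. f_lo g h b k p (xi k (Suc i)) (xi k i) \<ge> fk g h k p (xi k (Suc i)) - \<epsilon> k) \<and>
     norm (xi k (Suc i) - xi k i) \<le> \<delta> k / (lam + ell k)"

text \<open>The prox-ADC method generating outer iterates xs k = x^k, inner iterates xi k i = x^{k,i},
  and stopping indices ik k = i_k.\<close>
definition prox_ADC :: "nat \<Rightarrow> nat \<Rightarrow> (nat \<Rightarrow> real \<Rightarrow> ereal) \<Rightarrow> (nat \<Rightarrow> nat \<Rightarrow> 'a::real_inner \<Rightarrow> real) \<Rightarrow> (nat \<Rightarrow> nat \<Rightarrow> 'a \<Rightarrow> real)
    \<Rightarrow> (nat \<Rightarrow> nat \<Rightarrow> 'a \<Rightarrow> 'a) \<Rightarrow> (nat \<Rightarrow> nat \<Rightarrow> 'a \<Rightarrow> 'a) \<Rightarrow> (nat \<Rightarrow> nat \<Rightarrow> real) \<Rightarrow> real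
    \<Rightarrow> (nat \<Rightarrow> real) \<Rightarrow> (nat \<Rightarrow> real) \<Rightarrow> (nat \<Rightarrow> real) \<Rightarrow> (nat \<Rightarrow> 'a) \<Rightarrow> (nat \<Rightarrow> nat \<Rightarrow> 'a) \<Rightarrow> (nat \<Rightarrow> nat) \<Rightarrow> bool" where
  "prox_ADC m1 m Ph g h a b \<alpha>h lam \<epsilon> \<delta> ell xs xi ik \<longleftrightarrow>
     lam > 0 \<and>
     (\<forall>k. \<epsilon> k > 0) \<and> decseq \<epsilon> \<and> \<epsilon> \<longlonglongrightarrow> 0 \<and>
     (\<forall>k. \<delta> k > 0) \<and> decseq \<delta> \<and> \<delta> \<longlonglongrightarrow> 0 \<and>
     decseq (\<lambda>k. \<delta> k / (lam + ell k)) \<and> (\<lambda>k. \<delta> k / (lam + ell k)) \<longlonglongrightarrow> 0 \<and>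
     (\<forall>k. \<forall>p\<in>{1..m}. \<forall>y. a k p y \<in> csubdiff (h k p) y \<and> b k p y \<in> csubdiff (g k p) y) \<and>
     (\<forall>k. xi k 0 = xs k \<and>
          (\<forall>i \<le> ik k. is_subsol m1 m Ph g h a b \<alpha>h lam k (xi k i) (xi k (Suc i))) \<and>
          inner_stop m Ph g h a b \<alpha>h lam \<epsilon> \<delta> ell xi k (ik k) \<and>
          (\<forall>i < ik k. \<not> inner_stop m Ph g h a b \<alpha>h lam \<epsilon> \<delta> ell xi k i) \<and>
          xs (Suc k) = xi k (ik k))"

definition assumption6 :: "nat \<Rightarrow> nat \<Rightarrow> (nat \<Rightarrow> real \<Rightarrow> ereal) \<Rightarrow> (nat \<Rightarrow> nat \<Rightarrow> 'a::real_inner \<Rightarrow> real) \<Rightarrow> (nat \<Rightarrow> nat \<Rightarrow> 'a \<Rightarrow> real)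
    \<Rightarrow> (nat \<Rightarrow> nat \<Rightarrow> 'a \<Rightarrow> 'a) \<Rightarrow> (nat \<Rightarrow> nat \<Rightarrow> 'a \<Rightarrow> 'a) \<Rightarrow> (nat \<Rightarrow> nat \<Rightarrow> real) \<Rightarrow> real \<Rightarrow> bool" where
  "assumption6 m1 m Ph g h a b \<alpha>h lam \<longleftrightarrow> (\<forall>k x' x''. is_subsol m1 m Ph g h a b \<alpha>h lam k x' x'' \<longrightarrow>
     (\<forall>y::nat \<Rightarrow> real.
        (\<forall>p\<in>{m1<..m}. y p \<in> normal_cone {..0} (f_up g h a \<alpha>h k p x'' x')) \<and>
        0 \<in> msum {m1<..m} (\<lambda>p. mscale (y p) (df_up g a k p x'' x'))
        \<longrightarrow> (\<forall>p\<in>{m1<..m}. y p = 0)))"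

text \<open>The multiplier set Y^k(x^{k+1}); a multiplier is y p = (y_{p,1}, y_{p,2}).\<close>
definition Yset :: "nat \<Rightarrow> (nat \<Rightarrow> real \<Rightarrow> ereal) \<Rightarrow> (nat \<Rightarrow> nat \<Rightarrow> 'a::real_inner \<Rightarrow> real) \<Rightarrow> (nat \<Rightarrow> nat \<Rightarrow> 'a \<Rightarrow> real)
    \<Rightarrow> (nat \<Rightarrow> nat \<Rightarrow> 'a \<Rightarrow> 'a) \<Rightarrow> (nat \<Rightarrow> nat \<Rightarrow> 'a \<Rightarrow> 'a) \<Rightarrow> (nat \<Rightarrow> nat \<Rightarrow> real) \<Rightarrow> real
    \<Rightarrow> (nat \<Rightarrow> nat \<Rightarrow> 'a) \<Rightarrow> (nat \<Rightarrow> nat) \<Rightarrow> nat \<Rightarrow> (nat \<Rightarrow> real \<times> real) set" where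
  "Yset m Ph g h a b \<alpha>h lam xi ik k =
     (let x1 = xi k (Suc (ik k)); x0 = xi k (ik k) in
      {y. (\<forall>p\<in>{1..m}. fst (y p) \<in> esubdiff (phi_up (Ph p)) (f_up g h a \<alpha>h k p x1 x0)
                     \<and> snd (y p) \<in> esubdiff (phi_down (Ph p)) (f_lo g h b k p x1 x0)) \<and>
          0 \<in> (\<lambda>z. z + lam *\<^sub>R (x1 - x0)) `
                msum {1..m} (\<lambda>p. {fst (y p) *\<^sub>R u + snd (y p) *\<^sub>R w | u w.
                                    u \<in> df_up g a k p x1 x0 \<and> w \<in> df_lo h b k p x1 x0})})"

definition ynorm :: "nat \<Rightarrow> (nat \<Rightarrow> real \<times> real) \<Rightarrow> real" where
  "ynorm m y = sqrt (\<Sum>p\<in>{1..m}. (fst (y p))\<^sup>2 + (snd (y p))\<^sup>2)"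

definition weakly_A_stationary :: "nat \<Rightarrow> (nat \<Rightarrow> real \<Rightarrow> ereal) \<Rightarrow> (nat \<Rightarrow> nat \<Rightarrow> 'a::euclidean_space \<Rightarrow> real)
    \<Rightarrow> (nat \<Rightarrow> nat \<Rightarrow> 'a \<Rightarrow> real) \<Rightarrow> ereal \<Rightarrow> real \<Rightarrow> nat \<Rightarrow> 'a \<Rightarrow> bool" where
  "weakly_A_stationary m Ph g h \<eta> \<beta> kb x \<longleftrightarrow> (\<exists>k\<ge>kb.
     dist0 (msum {1..m} (\<lambda>p.
       let A = mdiff (csubdiff_beta (g k p) \<beta> x) (csubdiff_beta (h k p) \<beta> x) in
       \<Union>{ {y1 *\<^sub>R u1 + y2 *\<^sub>R u2 | u1 u2. u1 \<in> A \<and> u2 \<in> A} | y1 y2.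
            y1 \<in> esubdiff_beta (phi_up (Ph p)) \<beta> (fk g h k p x) \<and>
            y2 \<in> esubdiff_beta (phi_down (Ph p)) \<beta> (fk g h k p x)})) \<le> \<eta>)"

end

theory Submission
  imports Defs
begin

lemma convex_strict_epi:
  fixes f :: "'a::real_vector \<Rightarrow> real"
  assumes "convex_on UNIV f"
  shows "convex {p::'a\<times>real. f (fst p) < snd p}"
proof (rule convexI)
  fix p q :: "'a \<times> real" and u v :: real
  assume p: "p \<in> {p. f (fst p) < snd p}" and q: "q \<in> {p. f (fst p) < snd p}"
    and uv1: "0 \<le> u" and uv2: "0 \<le> v" and uv3: "u + v = 1"
  note uv = uv1 uv2 uv3
  have "f (u *\<^sub>R fst p + v *\<^sub>R fst q) \<le> u * f (fst p) + v * f (fst q)"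
    using assms uv unfolding convex_on_def by auto
  also have "\<dots> < u * snd p + v * snd q"
  proof (cases "u = 0")
    case True then show ?thesis using uv q by auto
  next
    case False
    then have "u * f (fst p) < u * snd p" using uv p by auto
    moreover have "v * f (fst q) \<le> v * snd q" using uv q by (auto intro: mult_left_mono)
    ultimately show ?thesis by linarith
  qed
  finally have "f (u *\<^sub>R fst p + v *\<^sub>R fst q) < u * snd p + v * snd q" .
  then show "u *\<^sub>R p + v *\<^sub>R q \<in> {p. f (fst p) < snd p}" by simp
qed

lemma convex_epi:
  fixes f :: "'a::real_vector \<Rightarrow> real"
  assumes "convex_on UNIV f"
  shows "convex {p::'a\<times>real. f (fst p) \<le> snd p}"
proof (rule convexI)
  fix p q :: "'a \<times> real" and u v :: real
  assume p: "p \<in> {p. f (fst p) \<le> snd p}" and q: "q \<in> {p. f (fst p) \<le> snd p}"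
    and uv1: "0 \<le> u" and uv2: "0 \<le> v" and uv3: "u + v = 1"
  note uv = uv1 uv2 uv3
  have "f (u *\<^sub>R fst p + v *\<^sub>R fst q) \<le> u * f (fst p) + v * f (fst q)"
    using assms uv unfolding convex_on_def by auto
  also have "\<dots> \<le> u * snd p + v * snd q"
    using uv p q by (auto intro!: add_mono mult_left_mono)
  finally have "f (u *\<^sub>R fst p + v *\<^sub>R fst q) \<le> u * snd p + v * snd q" .
  then show "u *\<^sub>R p + v *\<^sub>R q \<in> {p. f (fst p) \<le> snd p}" by simp
qed

lemma convex_strict_hypo:
  fixes g :: "'a::real_vector \<Rightarrow> real"
  assumes "convex_on UNIV g"
  shows "convex {p::'a\<times>real. snd p < K - g (fst p)}"
proof (rule convexI)
  fix p q :: "'a \<times> real" and u v :: real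
  assume p: "p \<in> {p. snd p < K - g (fst p)}" and q: "q \<in> {p. snd p < K - g (fst p)}"
    and uv1: "0 \<le> u" and uv2: "0 \<le> v" and uv3: "u + v = 1"
  note uv = uv1 uv2 uv3
  have "g (u *\<^sub>R fst p + v *\<^sub>R fst q) \<le> u * g (fst p) + v * g (fst q)"
    using assms uv unfolding convex_on_def by auto
  also have "\<dots> < u * (K - snd p) + v * (K - snd q)"
  proof (cases "u = 0")
    case True then show ?thesis using uv q by auto
  next
    case False
    then have "u * g (fst p) < u * (K - snd p)" using uv p by auto
    moreover have "v * g (fst q) \<le> v * (K - snd q)" using uv q by (auto intro: mult_left_mono)
    ultimately show ?thesis by linarith
  qed
  also have "\<dots> = K - (u * snd p + v * snd q)"
  proof -
    have "K * u + K * v = K" by (metis uv3 distrib_left mult_1_right)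
    then show ?thesis by (simp add: algebra_simps)
  qed
  finally have "g (u *\<^sub>R fst p + v *\<^sub>R fst q) < K - (u * snd p + v * snd q)" .
  then show "u *\<^sub>R p + v *\<^sub>R q \<in> {p. snd p < K - g (fst p)}" by simp
qed

lemma subgrad_exists:
  fixes f :: "'a::euclidean_space \<Rightarrow> real"
  assumes cf: "convex_on UNIV f"
  shows "\<exists>v. v \<in> csubdiff f x"
proof -
  define S where "S = {p::'a\<times>real. f (fst p) < snd p}"
  define T where "T = {(x, f x)}"
  have cS: "convex S" unfolding S_def by (rule convex_strict_epi[OF cf])
  have cT: "convex T" unfolding T_def by simp
  have "(x, f x + 1) \<in> S" unfolding S_def by simp
  then have ne: "S \<noteq> {}" "T \<noteq> {}" unfolding T_def by auto
  have dj: "S \<inter> T = {}" unfolding S_def T_def by auto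
  obtain a b where a0: "a \<noteq> 0" and aS: "\<forall>p\<in>S. inner a p \<le> b" and aT: "\<forall>p\<in>T. b \<le> inner a p"
    using separating_hyperplane_sets[OF cS cT ne dj] by auto
  obtain w c where wc: "a = (w, c)" by (cases a)
  have S1: "inner w z + c * t \<le> b" if "f z < t" for z t
    using aS that unfolding S_def wc by auto
  have T1: "b \<le> inner w x + c * f x" using aT unfolding T_def wc by auto
  have cle: "c \<le> 0"
  proof (rule ccontr)
    assume "\<not> c \<le> 0"
    then have c: "c > 0" by simp
    define t where "t = max (f x + 1) ((b - inner w x) / c + 1)"
    have "f x < t" unfolding t_def by auto
    from S1[OF this] have "inner w x + c * t \<le> b" .
    moreover have "c * t \<ge> c * ((b - inner w x) / c + 1)" unfolding t_def
      using c by (intro mult_left_mono) auto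
    moreover have "c * ((b - inner w x) / c + 1) = b - inner w x + c" using c by (simp add: field_simps)
    ultimately show False using c by linarith
  qed
  have cne: "c \<noteq> 0"
  proof
    assume c0: "c = 0"
    then have "w \<noteq> 0" using a0 wc by (auto simp: zero_prod_def)
    have "inner w (x + w) \<le> b" using S1[of "x + w" "f (x + w) + 1"] c0 by simp
    then have "inner w x + inner w w \<le> inner w x" using T1 c0 by (simp add: inner_add_right)
    then show False using \<open>w \<noteq> 0\<close> by (metis add_le_same_cancel1 inner_gt_zero_iff not_le)
  qed
  with cle have c: "c < 0" by simp
  have key: "inner w z + c * f z \<le> inner w x + c * f x" for z
  proof -
    have "inner w z + c * f z \<le> b + e" if e: "e > 0" for e
    proof -
      have "e / (- c) > 0" using c e by (intro divide_pos_pos) auto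
      then have "inner w z + c * (f z + e / (- c)) \<le> b" using S1[of z "f z + e / (- c)"] by auto
      moreover have "c * (f z + e / (- c)) = c * f z - e" using c by (simp add: field_simps)
      ultimately show ?thesis by linarith
    qed
    then have "inner w z + c * f z \<le> b" by (rule field_le_epsilon)
    then show ?thesis using T1 by linarith
  qed
  have "(- inverse c) *\<^sub>R w \<in> csubdiff f x"
    unfolding csubdiff_def
  proof (intro CollectI allI)
    fix z
    have "c * (f z - f x) \<le> - inner w (z - x)" using key[of z] by (simp add: inner_diff_right algebra_simps)
    then have "f z - f x \<ge> - inner w (z - x) / c" using c by (simp add: field_simps)
    then show "f x + inner ((- inverse c) *\<^sub>R w) (z - x) \<le> f z"
      by (simp add: field_simps)
  qed
  then show ?thesis by blast
qed

lemma sum_rule2: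
  fixes f g :: "'a::euclidean_space \<Rightarrow> real"
  assumes cf: "convex_on UNIV f" and cg: "convex_on UNIV g"
    and mn: "\<forall>z. f x + g x \<le> f z + g z"
  shows "\<exists>u. u \<in> csubdiff f x \<and> - u \<in> csubdiff g x"
proof -
  define S where "S = {p::'a\<times>real. snd p < f x + g x - g (fst p)}"
  define T where "T = {p::'a\<times>real. f (fst p) \<le> snd p}"
  have cT: "convex T" unfolding T_def by (rule convex_epi[OF cf])
  have cS: "convex S" unfolding S_def by (rule convex_strict_hypo[OF cg])
  have "(x, f x - 1) \<in> S" unfolding S_def by simp
  moreover have "(x, f x) \<in> T" unfolding T_def by simp
  ultimately have ne: "S \<noteq> {}" "T \<noteq> {}" by auto
  have dj: "S \<inter> T = {}" unfolding S_def T_def using mn by (auto simp: not_less) (smt (verit))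
  obtain a b where a0: "a \<noteq> 0" and aS: "\<forall>p\<in>S. inner a p \<le> b" and aT: "\<forall>p\<in>T. b \<le> inner a p"
    using separating_hyperplane_sets[OF cS cT ne dj] by auto
  obtain w c where wc: "a = (w, c)" by (cases a)
  have S1: "inner w z + c * t \<le> b" if "t < f x + g x - g z" for z t
    using aS that unfolding S_def wc by auto
  have T1: "b \<le> inner w z + c * t" if "f z \<le> t" for z t
    using aT that unfolding T_def wc by auto
  have cle: "c \<ge> 0"
  proof (rule ccontr)
    assume "\<not> c \<ge> 0"
    then have c: "c < 0" by simp
    define t where "t = max (f x) ((b - inner w x) / c + 1)"
    have "f x \<le> t" unfolding t_def by auto
    from T1[OF this] have "b \<le> inner w x + c * t" .
    moreover have "c * t \<le> c * ((b - inner w x) / c + 1)" unfolding t_def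
      using c by (intro mult_left_mono_neg) auto
    moreover have "c * ((b - inner w x) / c + 1) = b - inner w x + c" using c by (simp add: field_simps)
    ultimately show False using c by linarith
  qed
  have cne: "c \<noteq> 0"
  proof
    assume c0: "c = 0"
    then have "w \<noteq> 0" using a0 wc by (auto simp: zero_prod_def)
    have "inner w (x + w) \<le> b" using S1[of "f x + g x - g (x + w) - 1" "x + w"] c0 by simp
    then have "inner w x + inner w w \<le> inner w x" using T1[of x "f x"] c0 by (simp add: inner_add_right)
    then show False using \<open>w \<noteq> 0\<close> by (metis add_le_same_cancel1 inner_gt_zero_iff not_le)
  qed
  with cle have c: "c > 0" by simp
  have keyT: "b \<le> inner w z + c * f z" for z using T1[of z "f z"] by simp
  have keyS: "inner w z + c * (f x + g x - g z) \<le> b" for z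
  proof -
    have "inner w z + c * (f x + g x - g z) \<le> b + e" if e: "e > 0" for e
    proof -
      have "inner w z + c * (f x + g x - g z - e / c) \<le> b" using S1[of "f x + g x - g z - e / c" z] c e by auto
      moreover have "c * (f x + g x - g z - e / c) = c * (f x + g x - g z) - e" using c by (simp add: field_simps)
      ultimately show ?thesis by linarith
    qed
    then show ?thesis by (rule field_le_epsilon)
  qed
  have bx: "b = inner w x + c * f x" using keyT[of x] keyS[of x] by simp
  have "(- inverse c) *\<^sub>R w \<in> csubdiff f x"
    unfolding csubdiff_def
  proof (intro CollectI allI)
    fix z
    have "c * (f z - f x) \<ge> - inner w (z - x)" using keyT[of z] bx by (simp add: inner_diff_right algebra_simps)
    then have "f z - f x \<ge> - inner w (z - x) / c" using c by (simp add: field_simps)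
    then show "f x + inner ((- inverse c) *\<^sub>R w) (z - x) \<le> f z"
      by (simp add: field_simps)
  qed
  moreover have "- ((- inverse c) *\<^sub>R w) \<in> csubdiff g x"
    unfolding csubdiff_def
  proof (intro CollectI allI)
    fix z
    have "c * (g z - g x) \<ge> inner w (z - x)" using keyS[of z] bx by (simp add: inner_diff_right algebra_simps)
    then have "g z - g x \<ge> inner w (z - x) / c" using c by (simp add: field_simps)
    then show "g x + inner (- ((- inverse c) *\<^sub>R w)) (z - x) \<le> g z"
      by (simp add: field_simps)
  qed
  ultimately show ?thesis by blast
qed

lemma convex_on_sumI:
  fixes F :: "'i \<Rightarrow> 'a::real_vector \<Rightarrow> real"
  assumes "finite I" "\<forall>i\<in>I. convex_on UNIV (F i)"
  shows "convex_on UNIV (\<lambda>z. \<Sum>i\<in>I. F i z)"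
  using assms
proof (induction I rule: finite_induct)
  case empty then show ?case by (simp add: convex_on_const)
next
  case (insert i I)
  then show ?case by (simp add: convex_on_add)
qed

lemma convex_on_linear_fun: "convex_on UNIV (\<lambda>z::'a::real_inner. inner u z + c)"
  by (rule convex_onI) (auto simp: inner_add_right algebra_simps)

lemma csubdiff_zero_fun: "u \<in> csubdiff (\<lambda>z::'a::real_inner. 0) x \<Longrightarrow> u = 0"
proof -
  assume "u \<in> csubdiff (\<lambda>z::'a::real_inner. 0) x"
  then have "\<forall>z. inner u (z - x) \<le> 0" unfolding csubdiff_def by auto
  then have "inner u ((x + u) - x) \<le> 0" by blast
  then show "u = 0" by (metis add_diff_cancel_left' inner_gt_zero_iff not_le)
qed

lemma scale_rule:
  fixes F :: "'a::euclidean_space \<Rightarrow> real"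
  assumes c: "c \<ge> 0" and cF: "convex_on UNIV F" and u: "u \<in> csubdiff (\<lambda>z. c * F z) x"
  shows "\<exists>v. v \<in> csubdiff F x \<and> u = c *\<^sub>R v"
proof (cases "c = 0")
  case True
  then have "u = 0" using u csubdiff_zero_fun by auto
  moreover obtain v where "v \<in> csubdiff F x" using subgrad_exists[OF cF] by blast
  ultimately show ?thesis using True by auto
next
  case False
  then have cp: "c > 0" using c by simp
  have "inverse c *\<^sub>R u \<in> csubdiff F x"
    unfolding csubdiff_def
  proof (intro CollectI allI)
    fix z
    have "c * F x + inner u (z - x) \<le> c * F z" using u unfolding csubdiff_def by auto
    then have "F x + inner u (z - x) / c \<le> F z" using cp by (simp add: field_simps)
    then show "F x + inner (inverse c *\<^sub>R u) (z - x) \<le> F z" by (simp add: field_simps)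
  qed
  moreover have "u = c *\<^sub>R (inverse c *\<^sub>R u)" using cp by simp
  ultimately show ?thesis by blast
qed

lemma csubdiff_shift:
  assumes "v \<in> csubdiff (\<lambda>z. q z + inner u z) x"
  shows "v - u \<in> csubdiff q x"
  using assms unfolding csubdiff_def by (auto simp: inner_diff_left inner_diff_right algebra_simps)

lemma min_zero_subgrad:
  assumes "\<forall>z. q x \<le> q z"
  shows "0 \<in> csubdiff q x"
  using assms unfolding csubdiff_def by auto

lemma sum_rule_fin:
  fixes F :: "'i \<Rightarrow> 'a::euclidean_space \<Rightarrow> real"
  assumes "finite I" "\<forall>i\<in>I. c i \<ge> 0 \<and> convex_on UNIV (F i)" "convex_on UNIV q"
    "\<forall>z. (\<Sum>i\<in>I. c i * F i x) + q x \<le> (\<Sum>i\<in>I. c i * F i z) + q z"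
  shows "\<exists>v v0. (\<forall>i\<in>I. v i \<in> csubdiff (F i) x) \<and> v0 \<in> csubdiff q x \<and>
            (\<Sum>i\<in>I. c i *\<^sub>R v i) + v0 = 0"
  using assms
proof (induction I arbitrary: q rule: finite_induct)
  case empty
  then show ?case using min_zero_subgrad[of q x] by auto
next
  case (insert i I)
  have ci: "c i \<ge> 0" "convex_on UNIV (F i)" using insert.prems by auto
  have cR: "convex_on UNIV (\<lambda>z. (\<Sum>j\<in>I. c j * F j z) + q z)"
    using insert.prems insert.hyps
    by (intro convex_on_add convex_on_sumI) (auto intro!: convex_on_cmul)
  have cL: "convex_on UNIV (\<lambda>z. c i * F i z)" using ci by (intro convex_on_cmul)
  have "\<forall>z. c i * F i x + ((\<Sum>j\<in>I. c j * F j x) + q x) \<le> c i * F i z + ((\<Sum>j\<in>I. c j * F j z) + q z)"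
    using insert.prems(3) insert.hyps by (simp add: add.assoc)
  from sum_rule2[OF cL cR this] obtain u where
    u1: "u \<in> csubdiff (\<lambda>z. c i * F i z) x" and
    u2: "- u \<in> csubdiff (\<lambda>z. (\<Sum>j\<in>I. c j * F j z) + q z) x" by blast
  obtain vi where vi: "vi \<in> csubdiff (F i) x" "u = c i *\<^sub>R vi" using scale_rule[OF ci u1] by blast
  have u2': "\<forall>z. (\<Sum>j\<in>I. c j * F j x) + (q x + inner u x) \<le> (\<Sum>j\<in>I. c j * F j z) + (q z + inner u z)"
    using u2 unfolding csubdiff_def by (auto simp: inner_diff_right algebra_simps)
  have cq': "convex_on UNIV (\<lambda>z. q z + inner u z)"
    using insert.prems(2) convex_on_linear_fun[of u 0] by (intro convex_on_add) auto
  obtain v v0 where v: "\<forall>j\<in>I. v j \<in> csubdiff (F j) x" and v0: "v0 \<in> csubdiff (\<lambda>z. q z + inner u z) x"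
    and s: "(\<Sum>j\<in>I. c j *\<^sub>R v j) + v0 = 0"
    using insert.IH[of "\<lambda>z. q z + inner u z", OF _ cq' u2'] insert.prems(1) by blast
  define v' where "v' = v(i := vi)"
  have "(\<Sum>j\<in>I. c j *\<^sub>R v' j) = (\<Sum>j\<in>I. c j *\<^sub>R v j)"
    unfolding v'_def using insert.hyps by (intro sum.cong) auto
  then have "(\<Sum>j\<in>insert i I. c j *\<^sub>R v' j) + (v0 - u) = 0"
    using insert.hyps s vi(2) by (simp add: v'_def algebra_simps)
  moreover have "\<forall>j\<in>insert i I. v' j \<in> csubdiff (F j) x" using v vi unfolding v'_def by auto
  moreover have "v0 - u \<in> csubdiff q x" by (rule csubdiff_shift[OF v0])
  ultimately show ?case by blast
qed



lemma convex_on_compose_mono: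
  fixes H :: "'a::real_vector \<Rightarrow> real"
  assumes ct: "convex_on UNIV \<theta>" and mt: "mono \<theta>" and cH: "convex_on UNIV H"
  shows "convex_on UNIV (\<lambda>z. \<theta> (H z))"
  unfolding convex_on_def
proof (intro conjI ballI allI impI)
  show "convex (UNIV::'a set)" by simp
  fix x y :: 'a and u v :: real
  assume u: "0 \<le> u" and v: "0 \<le> v" and uv: "u + v = 1"
  have "H (u *\<^sub>R x + v *\<^sub>R y) \<le> u * H x + v * H y" using cH u v uv unfolding convex_on_def by auto
  then have "\<theta> (H (u *\<^sub>R x + v *\<^sub>R y)) \<le> \<theta> (u * H x + v * H y)" using mt by (auto dest: monoD)
  also have "\<dots> \<le> u * \<theta> (H x) + v * \<theta> (H y)" using ct u v uv unfolding convex_on_def by auto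
  finally show "\<theta> (H (u *\<^sub>R x + v *\<^sub>R y)) \<le> u * \<theta> (H x) + v * \<theta> (H y)" .
qed

lemma convex_upset:
  fixes F G :: "'a::real_vector \<Rightarrow> real"
  assumes D: "convex D" and cF: "convex_on UNIV F" and cG: "convex_on UNIV G"
  shows "convex {p::real\<times>real. \<exists>z\<in>D. F z \<le> fst p \<and> G z \<le> snd p}"
proof (rule convexI)
  fix p q :: "real \<times> real" and u v :: real
  assume p: "p \<in> {p::real\<times>real. \<exists>z\<in>D. F z \<le> fst p \<and> G z \<le> snd p}"
    and q: "q \<in> {p::real\<times>real. \<exists>z\<in>D. F z \<le> fst p \<and> G z \<le> snd p}"
    and u: "0 \<le> u" and v: "0 \<le> v" and uv: "u + v = 1"
  obtain z1 where z1: "z1 \<in> D" "F z1 \<le> fst p" "G z1 \<le> snd p" using p by auto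
  obtain z2 where z2: "z2 \<in> D" "F z2 \<le> fst q" "G z2 \<le> snd q" using q by auto
  have zD: "u *\<^sub>R z1 + v *\<^sub>R z2 \<in> D" using D z1 z2 u v uv unfolding convex_def by auto
  have "F (u *\<^sub>R z1 + v *\<^sub>R z2) \<le> u * F z1 + v * F z2" using cF u v uv unfolding convex_on_def by auto
  also have "\<dots> \<le> u * fst p + v * fst q" using z1 z2 u v by (intro add_mono mult_left_mono) auto
  finally have 1: "F (u *\<^sub>R z1 + v *\<^sub>R z2) \<le> fst (u *\<^sub>R p + v *\<^sub>R q)" by simp
  have "G (u *\<^sub>R z1 + v *\<^sub>R z2) \<le> u * G z1 + v * G z2" using cG u v uv unfolding convex_on_def by auto
  also have "\<dots> \<le> u * snd p + v * snd q" using z1 z2 u v by (intro add_mono mult_left_mono) auto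
  finally have 2: "G (u *\<^sub>R z1 + v *\<^sub>R z2) \<le> snd (u *\<^sub>R p + v *\<^sub>R q)" by simp
  show "u *\<^sub>R p + v *\<^sub>R q \<in> {p::real\<times>real. \<exists>z\<in>D. F z \<le> fst p \<and> G z \<le> snd p}"
    using zD 1 2 by blast
qed

lemma coef_nonneg:
  fixes \<alpha> s0 k b :: real
  assumes "\<forall>r\<ge>0. b \<le> \<alpha> * (s0 + r) + k"
  shows "\<alpha> \<ge> 0"
proof (rule ccontr)
  assume "\<not> \<alpha> \<ge> 0"
  then have a: "\<alpha> < 0" by simp
  define r where "r = max 0 ((\<alpha> * s0 + k - b) / (- \<alpha>) + 1)"
  have "b \<le> \<alpha> * (s0 + r) + k" using assms r_def by auto
  moreover have "\<alpha> * r \<le> \<alpha> * ((\<alpha> * s0 + k - b) / (- \<alpha>) + 1)"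
    unfolding r_def using a by (intro mult_left_mono_neg) auto
  moreover have "\<alpha> * ((\<alpha> * s0 + k - b) / (- \<alpha>) + 1) = b - \<alpha> * s0 - k + \<alpha>"
    using a by (simp add: field_simps)
  ultimately show False using a by (simp add: algebra_simps)
qed

lemma one_constraint:
  fixes F G :: "'a::euclidean_space \<Rightarrow> real"
  assumes D: "convex D" and xD: "x \<in> D" and cF: "convex_on UNIV F" and cG: "convex_on UNIV G"
    and Gx: "G x \<le> 0" and mn: "\<forall>z\<in>D. G z \<le> 0 \<longrightarrow> F x \<le> F z"
  shows "\<exists>c \<nu>. c \<ge> 0 \<and> \<nu> \<ge> 0 \<and> (c \<noteq> 0 \<or> \<nu> \<noteq> 0) \<and> \<nu> * G x = 0 \<and>
          (\<forall>z\<in>D. c * F x + \<nu> * G x \<le> c * F z + \<nu> * G z)"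
proof -
  define S where "S = {..<F x} \<times> {..(0::real)}"
  define T where "T = {p::real\<times>real. \<exists>z\<in>D. F z \<le> fst p \<and> G z \<le> snd p}"
  have cS: "convex S" unfolding S_def by (intro convex_Times) (auto simp: convex_real_interval)
  have cT: "convex T" unfolding T_def by (rule convex_upset[OF D cF cG])
  have "(F x - 1, 0) \<in> S" unfolding S_def by auto
  moreover have "(F x, G x) \<in> T" unfolding T_def using xD by auto
  ultimately have ne: "S \<noteq> {}" "T \<noteq> {}" by auto
  have dj: "S \<inter> T = {}" unfolding S_def T_def using mn by (fastforce simp: not_less)
  obtain a b where a0: "a \<noteq> 0" and aS: "\<forall>p\<in>S. inner a p \<le> b" and aT: "\<forall>p\<in>T. b \<le> inner a p"
    using separating_hyperplane_sets[OF cS cT ne dj] by auto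
  obtain \<alpha> \<beta> where ab: "a = (\<alpha>, \<beta>)" by (cases a)
  have S1: "\<alpha> * s + \<beta> * t \<le> b" if "s < F x" "t \<le> 0" for s t
    using aS that unfolding S_def ab by auto
  have T1: "b \<le> \<alpha> * s + \<beta> * t" if "z \<in> D" "F z \<le> s" "G z \<le> t" for z s t
    using aT that unfolding T_def ab by auto
  have al: "\<alpha> \<ge> 0"
    by (rule coef_nonneg[of b _ "F x" "\<beta> * G x"]) (use T1[OF xD] in auto)
  have be: "\<beta> \<ge> 0"
  proof (rule coef_nonneg[of b _ "G x" "\<alpha> * F x"], intro allI impI)
    fix r :: real assume "r \<ge> 0"
    then have "b \<le> \<alpha> * F x + \<beta> * (G x + r)" using T1[OF xD, of "F x" "G x + r"] by auto
    then show "b \<le> \<beta> * (G x + r) + \<alpha> * F x" by (simp add: algebra_simps)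
  qed
  have abne: "\<alpha> \<noteq> 0 \<or> \<beta> \<noteq> 0" using a0 ab by (auto simp: zero_prod_def)
  have aFx: "\<alpha> * F x \<le> b"
  proof (rule field_le_epsilon)
    fix e :: real assume e: "e > 0"
    have "\<alpha> * (F x - e / (\<alpha> + 1)) + \<beta> * 0 \<le> b" using e al by (intro S1) auto
    moreover have "\<alpha> * (e / (\<alpha> + 1)) \<le> e" using al e by (simp add: field_simps)
    ultimately show "\<alpha> * F x \<le> b + e" by (simp add: algebra_simps)
  qed
  have bx: "b \<le> \<alpha> * F x + \<beta> * G x" using T1[OF xD] by auto
  have "\<beta> * G x \<le> 0" using be Gx by (simp add: mult_nonneg_nonpos)
  then have bG: "\<beta> * G x = 0" using aFx bx by linarith
  have "\<forall>z\<in>D. \<alpha> * F x + \<beta> * G x \<le> \<alpha> * F z + \<beta> * G z"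
    using T1 aFx bG by fastforce
  then show ?thesis using al be abne bG by blast
qed



lemma sum_upd_insert:
  assumes "finite K" "k0 \<notin> K"
  shows "(\<Sum>k\<in>insert k0 K. (\<nu>(k0 := r)) k * C k z) = r * C k0 z + (\<Sum>k\<in>K. \<nu> k * C k z)"
proof -
  have "(\<Sum>k\<in>K. (\<nu>(k0 := r)) k * C k z) = (\<Sum>k\<in>K. \<nu> k * C k z)"
    using assms by (intro sum.cong) auto
  then show ?thesis using assms by simp
qed

lemma convex_sublevels:
  fixes C :: "'k \<Rightarrow> 'a::real_vector \<Rightarrow> real"
  assumes "\<forall>k\<in>K. convex_on UNIV (C k)"
  shows "convex {z. \<forall>k\<in>K. C k z \<le> 0}"
proof (rule convexI)
  fix x y :: 'a and u v :: real
  assume x: "x \<in> {z. \<forall>k\<in>K. C k z \<le> 0}" and y: "y \<in> {z. \<forall>k\<in>K. C k z \<le> 0}"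
    and u: "0 \<le> u" and v: "0 \<le> v" and uv: "u + v = 1"
  have "C k (u *\<^sub>R x + v *\<^sub>R y) \<le> 0" if k: "k \<in> K" for k
  proof -
    have "C k (u *\<^sub>R x + v *\<^sub>R y) \<le> u * C k x + v * C k y"
      using assms k u v uv unfolding convex_on_def by auto
    also have "\<dots> \<le> 0" using x y k u v by (simp add: add_nonpos_nonpos mult_nonneg_nonpos)
    finally show ?thesis .
  qed
  then show "u *\<^sub>R x + v *\<^sub>R y \<in> {z. \<forall>k\<in>K. C k z \<le> 0}" by simp
qed

lemma lagrange:
  fixes F :: "'a::euclidean_space \<Rightarrow> real" and C :: "'k \<Rightarrow> 'a \<Rightarrow> real"
  assumes "finite K" "convex_on UNIV F" "\<forall>k\<in>K. convex_on UNIV (C k)" "\<forall>k\<in>K. C k x \<le> 0"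
    "\<forall>z. (\<forall>k\<in>K. C k z \<le> 0) \<longrightarrow> F x \<le> F z"
  shows "(\<exists>\<nu>. (\<forall>k\<in>K. \<nu> k \<ge> 0 \<and> \<nu> k * C k x = 0) \<and>
             (\<forall>z. F x + (\<Sum>k\<in>K. \<nu> k * C k x) \<le> F z + (\<Sum>k\<in>K. \<nu> k * C k z)))
       \<or> (\<exists>\<nu>. (\<forall>k\<in>K. \<nu> k \<ge> 0 \<and> \<nu> k * C k x = 0) \<and> (\<exists>k\<in>K. \<nu> k \<noteq> 0) \<and>
             (\<forall>z. (\<Sum>k\<in>K. \<nu> k * C k x) \<le> (\<Sum>k\<in>K. \<nu> k * C k z)))"
  using assms
proof (induction K arbitrary: F rule: finite_induct)
  case empty
  then show ?case by auto
next
  case (insert k0 K)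
  define D where "D = {z. \<forall>k\<in>K. C k z \<le> 0}"
  have cD: "convex D" unfolding D_def using insert.prems(2) by (intro convex_sublevels) auto
  have xD: "x \<in> D" unfolding D_def using insert.prems(3) by auto
  have cC0: "convex_on UNIV (C k0)" using insert.prems(2) by auto
  have cK: "\<forall>k\<in>K. convex_on UNIV (C k)" "\<forall>k\<in>K. C k x \<le> 0" using insert.prems(2,3) by auto
  obtain c \<nu> where c: "c \<ge> 0" and nu: "\<nu> \<ge> 0" and cnu: "c \<noteq> 0 \<or> \<nu> \<noteq> 0" and cs: "\<nu> * C k0 x = 0"
    and ineq: "\<forall>z\<in>D. c * F x + \<nu> * C k0 x \<le> c * F z + \<nu> * C k0 z"
    using one_constraint[OF cD xD insert.prems(1) cC0] insert.prems(3,4) unfolding D_def by auto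
  show ?case
  proof (cases "c = 0")
    case False
    then have cp: "c > 0" using c by simp
    define F' where "F' = (\<lambda>z. F z + (\<nu> / c) * C k0 z)"
    have cF': "convex_on UNIV F'" unfolding F'_def using insert.prems(1) cC0 nu cp
      by (intro convex_on_add convex_on_cmul) auto
    have mF': "\<forall>z. (\<forall>k\<in>K. C k z \<le> 0) \<longrightarrow> F' x \<le> F' z"
    proof (intro allI impI)
      fix z assume "\<forall>k\<in>K. C k z \<le> 0"
      then have "z \<in> D" unfolding D_def by simp
      then have "c * F x + \<nu> * C k0 x \<le> c * F z + \<nu> * C k0 z" using ineq by blast
      then have "(c * F x + \<nu> * C k0 x) / c \<le> (c * F z + \<nu> * C k0 z) / c" using cp by (simp add: divide_right_mono)
      then show "F' x \<le> F' z" unfolding F'_def using cp by (simp add: field_simps)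
    qed
    from insert.IH[OF cF' cK mF'] show ?thesis
    proof
      assume "\<exists>\<nu>'. (\<forall>k\<in>K. \<nu>' k \<ge> 0 \<and> \<nu>' k * C k x = 0) \<and>
             (\<forall>z. F' x + (\<Sum>k\<in>K. \<nu>' k * C k x) \<le> F' z + (\<Sum>k\<in>K. \<nu>' k * C k z))"
      then obtain \<nu>' where n1: "\<forall>k\<in>K. \<nu>' k \<ge> 0 \<and> \<nu>' k * C k x = 0"
        and n2: "\<forall>z. F' x + (\<Sum>k\<in>K. \<nu>' k * C k x) \<le> F' z + (\<Sum>k\<in>K. \<nu>' k * C k z)" by blast
      define \<nu>'' where "\<nu>'' = \<nu>'(k0 := \<nu> / c)"
      have "\<forall>k\<in>insert k0 K. \<nu>'' k \<ge> 0 \<and> \<nu>'' k * C k x = 0"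
        using n1 nu cp cs insert.hyps unfolding \<nu>''_def by auto
      moreover have "\<forall>z. F x + (\<Sum>k\<in>insert k0 K. \<nu>'' k * C k x) \<le> F z + (\<Sum>k\<in>insert k0 K. \<nu>'' k * C k z)"
        using n2 unfolding \<nu>''_def sum_upd_insert[OF insert.hyps] F'_def by (simp add: algebra_simps)
      ultimately show ?thesis by blast
    next
      assume "\<exists>\<nu>'. (\<forall>k\<in>K. \<nu>' k \<ge> 0 \<and> \<nu>' k * C k x = 0) \<and> (\<exists>k\<in>K. \<nu>' k \<noteq> 0) \<and>
             (\<forall>z. (\<Sum>k\<in>K. \<nu>' k * C k x) \<le> (\<Sum>k\<in>K. \<nu>' k * C k z))"
      then obtain \<nu>' where n1: "\<forall>k\<in>K. \<nu>' k \<ge> 0 \<and> \<nu>' k * C k x = 0" and n3: "\<exists>k\<in>K. \<nu>' k \<noteq> 0"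
        and n2: "\<forall>z. (\<Sum>k\<in>K. \<nu>' k * C k x) \<le> (\<Sum>k\<in>K. \<nu>' k * C k z)" by blast
      define \<nu>'' where "\<nu>'' = \<nu>'(k0 := 0)"
      have "\<forall>k\<in>insert k0 K. \<nu>'' k \<ge> 0 \<and> \<nu>'' k * C k x = 0"
        using n1 insert.hyps unfolding \<nu>''_def by auto
      moreover have "\<exists>k\<in>insert k0 K. \<nu>'' k \<noteq> 0" using n3 insert.hyps unfolding \<nu>''_def by auto
      moreover have "\<forall>z. (\<Sum>k\<in>insert k0 K. \<nu>'' k * C k x) \<le> (\<Sum>k\<in>insert k0 K. \<nu>'' k * C k z)"
        using n2 unfolding \<nu>''_def sum_upd_insert[OF insert.hyps] by simp
      ultimately show ?thesis by blast
    qed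
  next
    case True
    then have np: "\<nu> > 0" using cnu nu by simp
    then have C0: "C k0 x = 0" using cs by simp
    have mC: "\<forall>z. (\<forall>k\<in>K. C k z \<le> 0) \<longrightarrow> C k0 x \<le> C k0 z"
    proof (intro allI impI)
      fix z assume "\<forall>k\<in>K. C k z \<le> 0"
      then have "z \<in> D" unfolding D_def by simp
      then have "c * F x + \<nu> * C k0 x \<le> c * F z + \<nu> * C k0 z" using ineq by blast
      then have "\<nu> * C k0 x \<le> \<nu> * C k0 z" using True by simp
      then show "C k0 x \<le> C k0 z" using np by simp
    qed
    have nn: "\<forall>k\<in>insert k0 K. (\<nu>'(k0 := r)) k \<ge> 0 \<and> (\<nu>'(k0 := r)) k * C k x = 0"
      if "\<forall>k\<in>K. \<nu>' k \<ge> 0 \<and> \<nu>' k * C k x = 0" "r \<ge> 0" for \<nu>' r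
      using that C0 insert.hyps by simp
    from insert.IH[OF cC0 cK mC] show ?thesis
    proof
      assume "\<exists>\<nu>'. (\<forall>k\<in>K. \<nu>' k \<ge> 0 \<and> \<nu>' k * C k x = 0) \<and>
             (\<forall>z. C k0 x + (\<Sum>k\<in>K. \<nu>' k * C k x) \<le> C k0 z + (\<Sum>k\<in>K. \<nu>' k * C k z))"
      then obtain \<nu>' where n1: "\<forall>k\<in>K. \<nu>' k \<ge> 0 \<and> \<nu>' k * C k x = 0"
        and n2: "\<forall>z. C k0 x + (\<Sum>k\<in>K. \<nu>' k * C k x) \<le> C k0 z + (\<Sum>k\<in>K. \<nu>' k * C k z)" by blast
      have "\<exists>k\<in>insert k0 K. (\<nu>'(k0 := 1)) k \<noteq> 0" by simp
      moreover have "\<forall>z. (\<Sum>k\<in>insert k0 K. (\<nu>'(k0 := 1)) k * C k x) \<le> (\<Sum>k\<in>insert k0 K. (\<nu>'(k0 := 1)) k * C k z)"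
        using n2 unfolding sum_upd_insert[OF insert.hyps] by simp
      moreover have "\<forall>k\<in>insert k0 K. (\<nu>'(k0 := 1)) k \<ge> 0 \<and> (\<nu>'(k0 := 1)) k * C k x = 0"
        using nn[OF n1, of 1] by simp
      ultimately show ?thesis by (intro disjI2 exI[of _ "\<nu>'(k0 := 1)"] conjI)
    next
      assume "\<exists>\<nu>'. (\<forall>k\<in>K. \<nu>' k \<ge> 0 \<and> \<nu>' k * C k x = 0) \<and> (\<exists>k\<in>K. \<nu>' k \<noteq> 0) \<and>
             (\<forall>z. (\<Sum>k\<in>K. \<nu>' k * C k x) \<le> (\<Sum>k\<in>K. \<nu>' k * C k z))"
      then obtain \<nu>' where n1: "\<forall>k\<in>K. \<nu>' k \<ge> 0 \<and> \<nu>' k * C k x = 0" and n3: "\<exists>k\<in>K. \<nu>' k \<noteq> 0"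
        and n2: "\<forall>z. (\<Sum>k\<in>K. \<nu>' k * C k x) \<le> (\<Sum>k\<in>K. \<nu>' k * C k z)" by blast
      have "\<exists>k\<in>insert k0 K. (\<nu>'(k0 := 0)) k \<noteq> 0" using n3 insert.hyps by auto
      moreover have "\<forall>z. (\<Sum>k\<in>insert k0 K. (\<nu>'(k0 := 0)) k * C k x) \<le> (\<Sum>k\<in>insert k0 K. (\<nu>'(k0 := 0)) k * C k z)"
        using n2 unfolding sum_upd_insert[OF insert.hyps] by simp
      moreover have "\<forall>k\<in>insert k0 K. (\<nu>'(k0 := 0)) k \<ge> 0 \<and> (\<nu>'(k0 := 0)) k * C k x = 0"
        using nn[OF n1, of 0] by simp
      ultimately show ?thesis by (intro disjI2 exI[of _ "\<nu>'(k0 := 0)"] conjI)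
    qed
  qed
qed



lemma chain1:
  fixes H G :: "'a::euclidean_space \<Rightarrow> real" and \<theta> :: "real \<Rightarrow> real"
  assumes ct: "convex_on UNIV \<theta>" and mt: "mono \<theta>" and cH: "convex_on UNIV H" and cG: "convex_on UNIV G"
    and mn: "\<forall>z. \<theta> (H x) + G x \<le> \<theta> (H z) + G z"
  shows "\<exists>\<mu>. (\<forall>s. \<theta> (H x) + \<mu> * (s - H x) \<le> \<theta> s) \<and> (\<forall>z. \<mu> * H x + G x \<le> \<mu> * H z + G z)"
proof -
  define v where "v = \<theta> (H x) + G x"
  define S where "S = {p::real\<times>real. snd p < v - \<theta> (fst p)}"
  define T where "T = {p::real\<times>real. \<exists>z\<in>UNIV. H z \<le> fst p \<and> G z \<le> snd p}"
  have cS: "convex S" unfolding S_def by (rule convex_strict_hypo[OF ct])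
  have cT: "convex T" unfolding T_def by (rule convex_upset[OF convex_UNIV cH cG])
  have "(H x, G x - 1) \<in> S" unfolding S_def v_def by auto
  moreover have "(H x, G x) \<in> T" unfolding T_def by auto
  ultimately have ne: "S \<noteq> {}" "T \<noteq> {}" by auto
  have dj: "S \<inter> T = {}"
  proof (rule ccontr)
    assume "S \<inter> T \<noteq> {}"
    then obtain s t z where "t < v - \<theta> s" "H z \<le> s" "G z \<le> t" unfolding S_def T_def by auto
    moreover have "\<theta> (H z) \<le> \<theta> s" using \<open>H z \<le> s\<close> by (rule monoD[OF mt])
    moreover have "\<theta> (H x) + G x \<le> \<theta> (H z) + G z" using mn by blast
    ultimately show False unfolding v_def by linarith
  qed
  obtain a b where a0: "a \<noteq> 0" and aS: "\<forall>p\<in>S. inner a p \<le> b" and aT: "\<forall>p\<in>T. b \<le> inner a p"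
    using separating_hyperplane_sets[OF cS cT ne dj] by auto
  obtain \<alpha> \<beta> where ab: "a = (\<alpha>, \<beta>)" by (cases a)
  have S1: "\<alpha> * s + \<beta> * t \<le> b" if "t < v - \<theta> s" for s t
    using aS that unfolding S_def ab by auto
  have T1: "b \<le> \<alpha> * s + \<beta> * t" if "H z \<le> s" "G z \<le> t" for z s t
    using aT that unfolding T_def ab by auto
  have al: "\<alpha> \<ge> 0"
  proof (rule coef_nonneg[of b _ "H x" "\<beta> * G x"], intro allI impI)
    fix r :: real assume "r \<ge> 0"
    then show "b \<le> \<alpha> * (H x + r) + \<beta> * G x" using T1[of x "H x + r" "G x"] by auto
  qed
  have be: "\<beta> \<ge> 0"
  proof (rule coef_nonneg[of b _ "G x" "\<alpha> * H x"], intro allI impI)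
    fix r :: real assume "r \<ge> 0"
    then have "b \<le> \<alpha> * H x + \<beta> * (G x + r)" using T1[of x "H x" "G x + r"] by auto
    then show "b \<le> \<beta> * (G x + r) + \<alpha> * H x" by (simp add: algebra_simps)
  qed
  have abne: "\<alpha> \<noteq> 0 \<or> \<beta> \<noteq> 0" using a0 ab by (auto simp: zero_prod_def)
  have bp: "\<beta> > 0"
  proof (rule ccontr)
    assume "\<not> \<beta> > 0"
    then have b0: "\<beta> = 0" using be by simp
    then have ap: "\<alpha> > 0" using abne al by simp
    have "\<alpha> * (b / \<alpha> + 1) + \<beta> * (v - \<theta> (b / \<alpha> + 1) - 1) \<le> b" by (rule S1) simp
    moreover have "\<alpha> * (b / \<alpha> + 1) = b + \<alpha>" using ap by (simp add: field_simps)
    ultimately show False using ap b0 by simp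
  qed
  have Sk: "\<alpha> * s + \<beta> * (v - \<theta> s) \<le> b" for s
  proof (rule field_le_epsilon)
    fix e :: real assume e: "e > 0"
    have "\<alpha> * s + \<beta> * (v - \<theta> s - e / \<beta>) \<le> b" using e bp by (intro S1) auto
    moreover have "\<beta> * (v - \<theta> s - e / \<beta>) = \<beta> * (v - \<theta> s) - e" using bp by (simp add: field_simps)
    ultimately show "\<alpha> * s + \<beta> * (v - \<theta> s) \<le> b + e" by linarith
  qed
  have bx: "b = \<alpha> * H x + \<beta> * G x"
  proof -
    have "\<alpha> * H x + \<beta> * (v - \<theta> (H x)) \<le> b" by (rule Sk)
    moreover have "v - \<theta> (H x) = G x" unfolding v_def by simp
    moreover have "b \<le> \<alpha> * H x + \<beta> * G x" using T1[of x "H x" "G x"] by simp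
    ultimately show ?thesis by simp
  qed
  define \<mu> where "\<mu> = \<alpha> / \<beta>"
  have "\<theta> (H x) + \<mu> * (s - H x) \<le> \<theta> s" for s
  proof -
    have "\<alpha> * s + \<beta> * (\<theta> (H x) + G x - \<theta> s) \<le> \<alpha> * H x + \<beta> * G x" using Sk[of s] bx unfolding v_def by simp
    moreover have "\<beta> * (\<theta> (H x) + \<mu> * (s - H x)) = \<beta> * \<theta> (H x) + \<alpha> * (s - H x)"
      unfolding \<mu>_def using bp by (simp add: field_simps)
    ultimately have "\<beta> * (\<theta> (H x) + \<mu> * (s - H x)) \<le> \<beta> * \<theta> s"
      by (simp add: algebra_simps)
    then show ?thesis using bp by simp
  qed
  moreover have "\<mu> * H x + G x \<le> \<mu> * H z + G z" for z
  proof -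
    have "\<alpha> * H x + \<beta> * G x \<le> \<alpha> * H z + \<beta> * G z" using T1[of z "H z" "G z"] bx by simp
    moreover have "\<beta> * (\<mu> * H y + G y) = \<alpha> * H y + \<beta> * G y" for y
      unfolding \<mu>_def using bp by (simp add: field_simps)
    ultimately have "\<beta> * (\<mu> * H x + G x) \<le> \<beta> * (\<mu> * H z + G z)" by simp
    then show ?thesis using bp by simp
  qed
  ultimately show ?thesis by blast
qed

lemma mono_subgrad_nonneg:
  assumes "mono \<theta>" "\<forall>s. \<theta> t + \<mu> * (s - t) \<le> \<theta> s"
  shows "\<mu> \<ge> (0::real)"
proof -
  have "\<theta> t + \<mu> * ((t - 1) - t) \<le> \<theta> (t - 1)" using spec[OF assms(2), of "t - 1"] .
  moreover have "\<theta> (t - 1) \<le> \<theta> t" by (rule monoD[OF assms(1)]) simp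
  ultimately show ?thesis by simp
qed

lemma chainJ:
  fixes H :: "'j \<Rightarrow> 'a::euclidean_space \<Rightarrow> real" and \<theta> :: "'j \<Rightarrow> real \<Rightarrow> real"
  assumes "finite J" "\<forall>j\<in>J. convex_on UNIV (\<theta> j) \<and> mono (\<theta> j) \<and> convex_on UNIV (H j)"
    "convex_on UNIV G"
    "\<forall>z. (\<Sum>j\<in>J. \<theta> j (H j x)) + G x \<le> (\<Sum>j\<in>J. \<theta> j (H j z)) + G z"
  shows "\<exists>\<mu>. (\<forall>j\<in>J. \<forall>s. \<theta> j (H j x) + \<mu> j * (s - H j x) \<le> \<theta> j s) \<and>
             (\<forall>z. (\<Sum>j\<in>J. \<mu> j * H j x) + G x \<le> (\<Sum>j\<in>J. \<mu> j * H j z) + G z)"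
  using assms
proof (induction J arbitrary: G rule: finite_induct)
  case empty
  then show ?case by auto
next
  case (insert j J)
  have cj: "convex_on UNIV (\<theta> j)" "mono (\<theta> j)" "convex_on UNIV (H j)" using insert.prems(1) by auto
  have bJ: "\<forall>i\<in>J. convex_on UNIV (\<theta> i) \<and> mono (\<theta> i) \<and> convex_on UNIV (H i)"
    using insert.prems(1) by simp
  have cJ: "\<forall>i\<in>J. convex_on UNIV (\<lambda>z. \<theta> i (H i z))"
  proof
    fix i assume "i \<in> J"
    then have "convex_on UNIV (\<theta> i)" "mono (\<theta> i)" "convex_on UNIV (H i)" using bJ by auto
    then show "convex_on UNIV (\<lambda>z. \<theta> i (H i z))" by (rule convex_on_compose_mono)
  qed
  have cG': "convex_on UNIV (\<lambda>z. (\<Sum>i\<in>J. \<theta> i (H i z)) + G z)"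
    by (intro convex_on_add convex_on_sumI[OF insert.hyps(1) cJ] insert.prems(2))
  have "\<forall>z. \<theta> j (H j x) + ((\<Sum>i\<in>J. \<theta> i (H i x)) + G x) \<le> \<theta> j (H j z) + ((\<Sum>i\<in>J. \<theta> i (H i z)) + G z)"
    using insert.prems(3) insert.hyps by (simp add: add.assoc)
  from chain1[OF cj cG' this] obtain \<mu>j where
    m1: "\<forall>s. \<theta> j (H j x) + \<mu>j * (s - H j x) \<le> \<theta> j s" and
    m2: "\<forall>z. \<mu>j * H j x + ((\<Sum>i\<in>J. \<theta> i (H i x)) + G x) \<le> \<mu>j * H j z + ((\<Sum>i\<in>J. \<theta> i (H i z)) + G z)"
    by blast
  have mj0: "\<mu>j \<ge> 0" by (rule mono_subgrad_nonneg[OF cj(2) m1])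
  have cG'': "convex_on UNIV (\<lambda>z. \<mu>j * H j z + G z)"
    using cj mj0 insert.prems(2) by (intro convex_on_add convex_on_cmul) auto
  have "\<forall>z. (\<Sum>i\<in>J. \<theta> i (H i x)) + (\<mu>j * H j x + G x) \<le> (\<Sum>i\<in>J. \<theta> i (H i z)) + (\<mu>j * H j z + G z)"
    using m2 by (simp add: algebra_simps)
  from insert.IH[OF bJ cG'' this] obtain \<mu> where
    n1: "\<forall>i\<in>J. \<forall>s. \<theta> i (H i x) + \<mu> i * (s - H i x) \<le> \<theta> i s" and
    n2: "\<forall>z. (\<Sum>i\<in>J. \<mu> i * H i x) + (\<mu>j * H j x + G x) \<le> (\<Sum>i\<in>J. \<mu> i * H i z) + (\<mu>j * H j z + G z)"
    by blast
  define \<mu>' where "\<mu>' = \<mu>(j := \<mu>j)"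
  have "\<forall>i\<in>insert j J. \<forall>s. \<theta> i (H i x) + \<mu>' i * (s - H i x) \<le> \<theta> i s"
  proof (intro ballI)
    fix i assume i: "i \<in> insert j J"
    show "\<forall>s. \<theta> i (H i x) + \<mu>' i * (s - H i x) \<le> \<theta> i s"
    proof (cases "i = j")
      case True then show ?thesis using m1 unfolding \<mu>'_def by simp
    next
      case False then have "i \<in> J" using i by simp
      then show ?thesis using n1 False unfolding \<mu>'_def by simp
    qed
  qed
  moreover have "\<forall>z. (\<Sum>i\<in>insert j J. \<mu>' i * H i x) + G x \<le> (\<Sum>i\<in>insert j J. \<mu>' i * H i z) + G z"
    using n2 unfolding \<mu>'_def sum_upd_insert[OF insert.hyps] by (simp add: algebra_simps)
  ultimately show ?case by blast
qed



lemma right_mono_of_min: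
  fixes \<theta> :: "real \<Rightarrow> real"
  assumes ct: "convex_on UNIV \<theta>" and mn: "\<forall>w. \<theta> z \<le> \<theta> w" and zs: "z \<le> s" and st: "s \<le> t"
  shows "\<theta> s \<le> \<theta> t"
proof (cases "z < t")
  case False
  then have "s = t" using zs st by simp
  then show ?thesis by simp
next
  case True
  have c: "convex_on {z..t} \<theta>" using ct by (rule convex_on_subset) auto
  have "\<theta> s \<le> (\<theta> t - \<theta> z) / (t - z) * (s - z) + \<theta> z"
    using convex_onD_Icc'[OF c, of s] zs st by simp
  also have "(\<theta> t - \<theta> z) / (t - z) * (s - z) = (\<theta> t - \<theta> z) * ((s - z) / (t - z))" by simp
  also have "\<dots> \<le> (\<theta> t - \<theta> z) * 1"
    using mn True zs st by (intro mult_left_mono) auto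
  finally show ?thesis by simp
qed

lemma left_antimono_of_min:
  fixes \<theta> :: "real \<Rightarrow> real"
  assumes ct: "convex_on UNIV \<theta>" and mn: "\<forall>w. \<theta> z \<le> \<theta> w" and st: "s \<le> t" and tz: "t \<le> z"
  shows "\<theta> t \<le> \<theta> s"
proof (cases "s < z")
  case False
  then have "s = t" using tz st by simp
  then show ?thesis by simp
next
  case True
  have c: "convex_on {s..z} \<theta>" using ct by (rule convex_on_subset) auto
  have "\<theta> t \<le> (\<theta> s - \<theta> z) / (z - s) * (z - t) + \<theta> z"
    using convex_onD_Icc''[OF c, of t] tz st by simp
  also have "(\<theta> s - \<theta> z) / (z - s) * (z - t) = (\<theta> s - \<theta> z) * ((z - t) / (z - s))" by simp
  also have "\<dots> \<le> (\<theta> s - \<theta> z) * 1"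
    using mn True tz st by (intro mult_left_mono) auto
  finally show ?thesis by simp
qed

lemma max_comp_props:
  fixes \<theta> :: "real \<Rightarrow> real"
  assumes ct: "convex_on UNIV \<theta>" and mn: "\<forall>w. \<theta> z \<le> \<theta> w"
  shows "convex_on UNIV (\<lambda>x. \<theta> (max x z))" "mono (\<lambda>x. \<theta> (max x z))"
proof -
  show "mono (\<lambda>x. \<theta> (max x z))"
  proof (rule monoI)
    fix x y :: real assume "x \<le> y"
    then show "\<theta> (max x z) \<le> \<theta> (max y z)" by (intro right_mono_of_min[OF ct mn]) auto
  qed
  show "convex_on UNIV (\<lambda>x. \<theta> (max x z))"
    unfolding convex_on_def
  proof (intro conjI ballI allI impI)
    show "convex (UNIV :: real set)" by simp
    fix x y u v :: real assume u: "0 \<le> u" and v: "0 \<le> v" and uv: "u + v = 1"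
    have z: "z = u * z + v * z" using uv by (metis distrib_right mult_1)
    have "u * x \<le> u * max x z" "v * y \<le> v * max y z" "u * z \<le> u * max x z" "v * z \<le> v * max y z"
      using u v by (auto intro: mult_left_mono)
    then have m: "max (u * x + v * y) z \<le> u * max x z + v * max y z" using z by linarith
    have "\<theta> (max (u *\<^sub>R x + v *\<^sub>R y) z) \<le> \<theta> (u * max x z + v * max y z)"
      using m by (intro right_mono_of_min[OF ct mn]) auto
    also have "\<dots> \<le> u * \<theta> (max x z) + v * \<theta> (max y z)"
      using ct u v uv unfolding convex_on_def by (metis UNIV_I real_scaleR_def)
    finally show "\<theta> (max (u *\<^sub>R x + v *\<^sub>R y) z) \<le> u * \<theta> (max x z) + v * \<theta> (max y z)" .
  qed
qed

lemma min_comp_props: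
  fixes \<theta> :: "real \<Rightarrow> real"
  assumes ct: "convex_on UNIV \<theta>" and mn: "\<forall>w. \<theta> z \<le> \<theta> w"
  shows "convex_on UNIV (\<lambda>x. \<theta> (min x z) - c)" "\<forall>s t. s \<le> t \<longrightarrow> \<theta> (min t z) - c \<le> \<theta> (min s z) - c"
proof -
  show "\<forall>s t. s \<le> t \<longrightarrow> \<theta> (min t z) - c \<le> \<theta> (min s z) - c"
  proof (intro allI impI)
    fix x y :: real assume "x \<le> y"
    then have "\<theta> (min y z) \<le> \<theta> (min x z)" by (intro left_antimono_of_min[OF ct mn]) auto
    then show "\<theta> (min y z) - c \<le> \<theta> (min x z) - c" by simp
  qed
  show "convex_on UNIV (\<lambda>x. \<theta> (min x z) - c)"
    unfolding convex_on_def
  proof (intro conjI ballI allI impI)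
    show "convex (UNIV :: real set)" by simp
    fix x y u v :: real assume u: "0 \<le> u" and v: "0 \<le> v" and uv: "u + v = 1"
    have z: "z = u * z + v * z" using uv by (metis distrib_right mult_1)
    have "u * min x z \<le> u * x" "v * min y z \<le> v * y" "u * min x z \<le> u * z" "v * min y z \<le> v * z"
      using u v by (auto intro: mult_left_mono)
    then have m: "u * min x z + v * min y z \<le> min (u * x + v * y) z" using z by linarith
    have "\<theta> (min (u *\<^sub>R x + v *\<^sub>R y) z) \<le> \<theta> (u * min x z + v * min y z)"
      using m by (intro left_antimono_of_min[OF ct mn]) auto
    also have "\<dots> \<le> u * \<theta> (min x z) + v * \<theta> (min y z)"
      using ct u v uv unfolding convex_on_def by (metis UNIV_I real_scaleR_def)
    finally have "\<theta> (min (u *\<^sub>R x + v *\<^sub>R y) z) \<le> u * \<theta> (min x z) + v * \<theta> (min y z)" .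
    moreover have "c = u * c + v * c" using uv by (metis distrib_right mult_1)
    ultimately show "\<theta> (min (u *\<^sub>R x + v *\<^sub>R y) z) - c \<le> u * (\<theta> (min x z) - c) + v * (\<theta> (min y z) - c)"
      by (simp add: algebra_simps)
  qed
qed

lemma convex_slope_ge:
  fixes \<theta> :: "real \<Rightarrow> real"
  assumes ct: "convex_on UNIV \<theta>" and "a < b" "b < c" "\<theta> a < \<theta> b"
  shows "\<theta> b \<le> \<theta> c"
proof -
  define u where "u = (c - b) / (c - a)"
  define v where "v = (b - a) / (c - a)"
  have ca: "c - a \<noteq> 0" "c - a > 0" using assms(2,3) by auto
  have u: "0 \<le> u" and v: "0 \<le> v" using assms(2,3) unfolding u_def v_def by auto
  have "u + v = ((c - b) + (b - a)) / (c - a)" unfolding u_def v_def by (rule add_divide_distrib[symmetric])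
  also have "(c - b) + (b - a) = c - a" by simp
  finally have uv: "u + v = 1" using ca by simp
  have cu: "(c - a) * u = c - b" unfolding u_def using ca by simp
  have cv: "(c - a) * v = b - a" unfolding v_def using ca by simp
  have "(c - a) * (u * a + v * c) = ((c - a) * u) * a + ((c - a) * v) * c" by (simp add: algebra_simps)
  also have "\<dots> = (c - b) * a + (b - a) * c" using cu cv by simp
  also have "\<dots> = (c - a) * b" by (simp add: algebra_simps)
  finally have "u * a + v * c = b" using ca by simp
  then have b: "b = u *\<^sub>R a + v *\<^sub>R c" by simp
  have "\<theta> b \<le> max (\<theta> a) (\<theta> c)" unfolding b by (rule convex_lower[OF ct _ _ u v uv]) auto
  then show ?thesis using assms(4) by simp
qed

lemma convex_slope_le:
  fixes \<theta> :: "real \<Rightarrow> real"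
  assumes ct: "convex_on UNIV \<theta>" and "a < b" "b < c" "\<theta> c < \<theta> b"
  shows "\<theta> b \<le> \<theta> a"
proof -
  define u where "u = (c - b) / (c - a)"
  define v where "v = (b - a) / (c - a)"
  have ca: "c - a \<noteq> 0" "c - a > 0" using assms(2,3) by auto
  have u: "0 \<le> u" and v: "0 \<le> v" using assms(2,3) unfolding u_def v_def by auto
  have "u + v = ((c - b) + (b - a)) / (c - a)" unfolding u_def v_def by (rule add_divide_distrib[symmetric])
  also have "(c - b) + (b - a) = c - a" by simp
  finally have uv: "u + v = 1" using ca by simp
  have cu: "(c - a) * u = c - b" unfolding u_def using ca by simp
  have cv: "(c - a) * v = b - a" unfolding v_def using ca by simp
  have "(c - a) * (u * a + v * c) = ((c - a) * u) * a + ((c - a) * v) * c" by (simp add: algebra_simps)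
  also have "\<dots> = (c - b) * a + (b - a) * c" using cu cv by simp
  also have "\<dots> = (c - a) * b" by (simp add: algebra_simps)
  finally have "u * a + v * c = b" using ca by simp
  then have b: "b = u *\<^sub>R a + v *\<^sub>R c" by simp
  have "\<theta> b \<le> max (\<theta> a) (\<theta> c)" unfolding b by (rule convex_lower[OF ct _ _ u v uv]) auto
  then show ?thesis using assms(4) by simp
qed

lemma exists_min:
  fixes \<theta> :: "real \<Rightarrow> real"
  assumes ct: "convex_on UNIV \<theta>" and s: "s \<le> t" "\<theta> t < \<theta> s" and s': "s' \<le> t'" "\<theta> s' < \<theta> t'"
  shows "\<exists>z. \<forall>w. \<theta> z \<le> \<theta> w"
proof -
  define L where "L = min s s'"
  define U where "U = max t t'"
  have cont: "continuous_on {L..U} \<theta>"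
    using convex_on_continuous[OF open_UNIV ct] by (rule continuous_on_subset) auto
  have "L \<le> U" unfolding L_def U_def using s s' by auto
  then obtain z where z: "z \<in> {L..U}" and zm: "\<forall>y\<in>{L..U}. \<theta> z \<le> \<theta> y"
    using continuous_attains_inf[OF compact_Icc _ cont] by auto
  have "\<theta> z \<le> \<theta> w" for w
  proof (cases "w < L")
    case True
    have st: "s < t" using s by (cases "s = t") auto
    have "\<theta> s \<le> \<theta> w" using convex_slope_le[OF ct, of w s t] True s st unfolding L_def by auto
    moreover have "\<theta> z \<le> \<theta> s" using zm s s' unfolding L_def U_def by auto
    ultimately show ?thesis by simp
  next
    case False
    show ?thesis
    proof (cases "U < w")
      case True
      have st: "s' < t'" using s' by (cases "s' = t'") auto
      have "\<theta> t' \<le> \<theta> w" using convex_slope_ge[OF ct, of s' t' w] True s' st unfolding U_def by auto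
      moreover have "\<theta> z \<le> \<theta> t'" using zm s s' unfolding L_def U_def by auto
      ultimately show ?thesis by simp
    next
      case False
      then show ?thesis using zm \<open>\<not> w < L\<close> by auto
    qed
  qed
  then show ?thesis by blast
qed

lemma phi_real:
  fixes \<theta> :: "real \<Rightarrow> real"
  assumes ct: "convex_on UNIV \<theta>"
  shows "\<exists>\<theta>u \<theta>d. phi_up (\<lambda>z. ereal (\<theta> z)) = (\<lambda>z. ereal (\<theta>u z)) \<and>
                 phi_down (\<lambda>z. ereal (\<theta> z)) = (\<lambda>z. ereal (\<theta>d z)) \<and>
                 convex_on UNIV \<theta>u \<and> mono \<theta>u \<and> convex_on UNIV \<theta>d \<and> (\<forall>s t. s \<le> t \<longrightarrow> \<theta>d t \<le> \<theta>d s)"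
proof -
  let ?\<psi> = "\<lambda>z. ereal (\<theta> z)"
  have c0: "convex_on UNIV (\<lambda>_::real. 0::real)" by (simp add: convex_on_const)
  show ?thesis
  proof (cases "nondecr ?\<psi>")
    case True
    then have m: "mono \<theta>" unfolding nondecr_def mono_def by simp
    have u: "phi_up ?\<psi> = (\<lambda>z. ereal (\<theta> z))" unfolding phi_up_def using True by simp
    have d: "phi_down ?\<psi> = (\<lambda>z. ereal ((\<lambda>_. 0) z))" unfolding phi_down_def using True
      by (simp add: zero_ereal_def)
    have z: "\<forall>s t. s \<le> t \<longrightarrow> (\<lambda>_::real. 0::real) t \<le> (\<lambda>_::real. 0::real) s" by simp
    show ?thesis
      by (rule exI[of _ \<theta>], rule exI[of _ "\<lambda>_. 0"]) (intro conjI u d m ct c0 z)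
  next
    case nd: False
    show ?thesis
    proof (cases "nonincr ?\<psi>")
      case True
      then have m: "\<forall>s t. s \<le> t \<longrightarrow> \<theta> t \<le> \<theta> s" unfolding nonincr_def by simp
      have u: "phi_up ?\<psi> = (\<lambda>z. ereal ((\<lambda>_. 0) z))" unfolding phi_up_def using True nd
        by (simp add: zero_ereal_def)
      have d: "phi_down ?\<psi> = (\<lambda>z. ereal (\<theta> z))" unfolding phi_down_def using True nd by simp
      have z: "mono (\<lambda>_::real. 0::real)" by (simp add: mono_def)
      show ?thesis
        by (rule exI[of _ "\<lambda>_. 0"], rule exI[of _ \<theta>]) (intro conjI u d m ct c0 z)
    next
      case ni: False
      obtain s t where s: "s \<le> t" "\<theta> t < \<theta> s" using nd unfolding nondecr_def by (auto simp: not_le)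
      obtain s' t' where s': "s' \<le> t'" "\<theta> s' < \<theta> t'" using ni unfolding nonincr_def by (auto simp: not_le)
      have ex: "\<exists>z. \<forall>w. ?\<psi> z \<le> ?\<psi> w" using exists_min[OF ct s s'] by simp
      define z where "z = minimizer ?\<psi>"
      have "\<forall>w. ?\<psi> z \<le> ?\<psi> w" using someI_ex[OF ex] unfolding z_def minimizer_def .
      then have zm: "\<forall>w. \<theta> z \<le> \<theta> w" by simp
      have u: "phi_up ?\<psi> = (\<lambda>x. ereal (\<theta> (max x z)))"
      proof -
        have "phi_up ?\<psi> = (\<lambda>x. if x \<le> z then ereal (\<theta> z) else ereal (\<theta> x))"
          unfolding phi_up_def z_def using nd ni by simp
        also have "\<dots> = (\<lambda>x. ereal (\<theta> (max x z)))" by (rule ext) (simp add: max_def)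
        finally show ?thesis .
      qed
      have d: "phi_down ?\<psi> = (\<lambda>x. ereal (\<theta> (min x z) - \<theta> z))"
      proof -
        have "phi_down ?\<psi> = (\<lambda>x. if x \<le> z then ereal (\<theta> x) - ereal (\<theta> z) else 0)"
          unfolding phi_down_def z_def using nd ni by simp
        also have "\<dots> = (\<lambda>x. ereal (\<theta> (min x z) - \<theta> z))" by (rule ext) (simp add: min_def zero_ereal_def)
        finally show ?thesis .
      qed
      have p1: "convex_on UNIV (\<lambda>x. \<theta> (max x z))" "mono (\<lambda>x. \<theta> (max x z))"
        using max_comp_props[OF ct zm] by auto
      have p2: "convex_on UNIV (\<lambda>x. \<theta> (min x z) - \<theta> z)"
        "\<forall>s t. s \<le> t \<longrightarrow> \<theta> (min t z) - \<theta> z \<le> \<theta> (min s z) - \<theta> z"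
        using min_comp_props[OF ct zm, of "\<theta> z"] by auto
      show ?thesis
        by (rule exI[of _ "\<lambda>x. \<theta> (max x z)"], rule exI[of _ "\<lambda>x. \<theta> (min x z) - \<theta> z"])
          (intro conjI u d p1 p2)
    qed
  qed
qed

lemma esubdiff_real:
  "esubdiff (\<lambda>z. ereal (\<theta> z)) t = {y. \<forall>s. \<theta> t + y * (s - t) \<le> \<theta> s}"
  unfolding esubdiff_def by simp

lemma esubdiff_zero: "esubdiff (\<lambda>_. 0) t = {0}"
proof -
  have "y = 0" if "\<forall>s. ereal (y * (s - t)) \<le> 0" for y
  proof -
    have "ereal (y * ((t + y) - t)) \<le> 0" using that by blast
    then have "y * y \<le> 0" by (simp add: zero_ereal_def)
    then show ?thesis by (metis mult_eq_0_iff antisym zero_le_square)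
  qed
  then show ?thesis unfolding esubdiff_def by auto
qed

lemma nondecr_ind: "nondecr ind_nonpos"
  unfolding nondecr_def ind_nonpos_def by auto

lemma phi_up_ind: "phi_up ind_nonpos = ind_nonpos"
  unfolding phi_up_def using nondecr_ind by simp

lemma phi_down_ind: "phi_down ind_nonpos = (\<lambda>_. 0)"
  unfolding phi_down_def using nondecr_ind by simp

lemma esubdiff_ind:
  assumes "t \<le> 0" "\<nu> \<ge> 0" "\<nu> * t = 0"
  shows "\<nu> \<in> esubdiff ind_nonpos t"
  unfolding esubdiff_def ind_nonpos_def
proof (intro CollectI conjI allI)
  show "(if t \<le> 0 then 0 else \<infinity>) \<noteq> (\<infinity>::ereal)" using assms by simp
  fix s :: real
  show "(if t \<le> 0 then 0 else \<infinity>) + ereal (\<nu> * (s - t)) \<le> (if s \<le> 0 then 0 else \<infinity>)"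
  proof (cases "s \<le> 0")
    case True
    then have "\<nu> * s \<le> 0" using assms by (simp add: mult_nonneg_nonpos)
    moreover have "\<nu> * (s - t) = \<nu> * s - \<nu> * t" by (simp add: right_diff_distrib)
    ultimately have "\<nu> * (s - t) \<le> 0" using assms(3) by linarith
    then show ?thesis using True assms by (simp add: zero_ereal_def)
  qed simp
qed

lemma convex_on_reflect:
  fixes \<theta> :: "real \<Rightarrow> real"
  assumes "convex_on UNIV \<theta>"
  shows "convex_on UNIV (\<lambda>t. \<theta> (- t))"
  unfolding convex_on_def
proof (intro conjI ballI allI impI)
  show "convex (UNIV :: real set)" by simp
  fix x y u v :: real assume u: "0 \<le> u" and v: "0 \<le> v" and uv: "u + v = 1"
  have "\<theta> (u *\<^sub>R (- x) + v *\<^sub>R (- y)) \<le> u * \<theta> (- x) + v * \<theta> (- y)"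
    using assms u v uv unfolding convex_on_def by blast
  moreover have "u *\<^sub>R (- x) + v *\<^sub>R (- y) = - (u *\<^sub>R x + v *\<^sub>R y)" by simp
  ultimately show "\<theta> (- (u *\<^sub>R x + v *\<^sub>R y)) \<le> u * \<theta> (- x) + v * \<theta> (- y)" by simp
qed

lemma convex_on_affine_shift:
  fixes g :: "'a::real_inner \<Rightarrow> real"
  assumes "convex_on UNIV g"
  shows "convex_on UNIV (\<lambda>z. g z - c1 - inner u (z - x0) + c2)"
proof -
  have "convex_on UNIV (\<lambda>z. g z + (inner (- u) z + (inner u x0 - c1 + c2)))"
    by (intro convex_on_add assms convex_on_linear_fun)
  moreover have "(\<lambda>z. g z + (inner (- u) z + (inner u x0 - c1 + c2))) = (\<lambda>z. g z - c1 - inner u (z - x0) + c2)"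
    by (auto simp: inner_diff_right algebra_simps)
  ultimately show ?thesis by simp
qed

lemma csubdiff_affine_shift:
  assumes "v \<in> csubdiff (\<lambda>z. g z - c1 - inner u (z - x0) + c2) x"
  shows "v + u \<in> csubdiff g x"
  using assms unfolding csubdiff_def by (auto simp: inner_diff_right inner_add_left algebra_simps)

lemma norm_sq_convex:
  fixes x0 :: "'a::real_inner"
  shows "convex_on UNIV (\<lambda>z. (norm (z - x0))\<^sup>2)"
  unfolding convex_on_def
proof (intro conjI ballI allI impI)
  show "convex (UNIV :: 'a set)" by simp
  fix x y :: 'a and u v :: real assume u: "0 \<le> u" and v: "0 \<le> v" and uv: "u + v = 1"
  define a where "a = x - x0"
  define b where "b = y - x0"
  have e: "u *\<^sub>R x + v *\<^sub>R y - x0 = u *\<^sub>R a + v *\<^sub>R b"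
    unfolding a_def b_def using uv by (simp add: algebra_simps) (metis scaleR_add_left scaleR_one)
  have n1: "(norm (u *\<^sub>R a + v *\<^sub>R b))\<^sup>2 = u\<^sup>2 * (a \<bullet> a) + 2 * u * v * (a \<bullet> b) + v\<^sup>2 * (b \<bullet> b)"
    unfolding power2_norm_eq_inner by (simp add: inner_add_left inner_add_right inner_commute power2_eq_square algebra_simps)
  have n2: "0 \<le> (a - b) \<bullet> (a - b)" by simp
  have n3: "(a - b) \<bullet> (a - b) = a \<bullet> a - 2 * (a \<bullet> b) + b \<bullet> b"
    by (simp add: inner_diff_left inner_diff_right inner_commute)
  have "u * (a \<bullet> a) + v * (b \<bullet> b) - (u\<^sup>2 * (a \<bullet> a) + 2 * u * v * (a \<bullet> b) + v\<^sup>2 * (b \<bullet> b))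
        = u * v * ((a - b) \<bullet> (a - b))"
    unfolding n3 using uv by (simp add: power2_eq_square algebra_simps) (smt (verit, ccfv_threshold) add_diff_cancel_left' distrib_left mult.assoc mult.commute mult_cancel_left1 mult_cancel_right1 right_diff_distrib)
  moreover have "0 \<le> u * v * ((a - b) \<bullet> (a - b))" using u v n2 by simp
  ultimately have "(norm (u *\<^sub>R a + v *\<^sub>R b))\<^sup>2 \<le> u * (a \<bullet> a) + v * (b \<bullet> b)" unfolding n1 by linarith
  then show "(norm (u *\<^sub>R x + v *\<^sub>R y - x0))\<^sup>2 \<le> u * (norm (x - x0))\<^sup>2 + v * (norm (y - x0))\<^sup>2"
    unfolding e a_def b_def by (simp add: power2_norm_eq_inner)
qed

lemma csubdiff_q:
  fixes x0 :: "'a::real_inner"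
  assumes lam: "lam > 0" and v: "v \<in> csubdiff (\<lambda>z. lam / 2 * (norm (z - x0))\<^sup>2) x"
  shows "v = lam *\<^sub>R (x - x0)"
proof (rule ccontr)
  assume ne: "v \<noteq> lam *\<^sub>R (x - x0)"
  define d where "d = v - lam *\<^sub>R (x - x0)"
  have dn: "d \<bullet> d > 0" using ne unfolding d_def by simp
  define t where "t = 1 / lam"
  define A where "A = (norm (x - x0))\<^sup>2"
  define P where "P = (x - x0) \<bullet> d"
  define D where "D = d \<bullet> d"
  have h1: "lam / 2 * A + v \<bullet> ((x + t *\<^sub>R d) - x) \<le> lam / 2 * (norm ((x + t *\<^sub>R d) - x0))\<^sup>2"
    using v unfolding csubdiff_def A_def by blast
  have h2: "(norm ((x + t *\<^sub>R d) - x0))\<^sup>2 = A + 2 * t * P + t\<^sup>2 * D"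
    unfolding A_def P_def D_def power2_norm_eq_inner
    by (simp add: inner_add_left inner_add_right inner_diff_left inner_diff_right
        inner_commute power2_eq_square algebra_simps)
  have veq: "v = d + lam *\<^sub>R (x - x0)" unfolding d_def by simp
  have h3': "(d + lam *\<^sub>R (x - x0)) \<bullet> ((x + t *\<^sub>R d) - x) = t * D + lam * t * P"
    unfolding D_def P_def by (simp add: inner_add_left inner_commute algebra_simps)
  have h3: "v \<bullet> ((x + t *\<^sub>R d) - x) = t * D + lam * t * P"
    using h3' unfolding veq[symmetric] .
  have h4: "lam / 2 * (A + 2 * t * P + t\<^sup>2 * D) = lam / 2 * A + lam * t * P + (lam / 2 * t\<^sup>2) * D"
    by (simp add: algebra_simps)
  have h5: "lam / 2 * t\<^sup>2 = t / 2" unfolding t_def using lam by (simp add: power2_eq_square)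
  from h1 h2 h3 h4 h5 have "t * D \<le> t / 2 * D" by simp
  moreover have "t > 0" unfolding t_def using lam by simp
  moreover have "D > 0" using dn unfolding D_def .
  ultimately have "0 < t / 2 * D" "t * D \<le> t / 2 * D" by simp_all
  moreover have "t * D = t / 2 * D + t / 2 * D" by simp
  ultimately show False by linarith
qed



lemma kkt_main:
  fixes \<phi> :: "nat \<Rightarrow> real \<Rightarrow> real"
    and g h :: "nat \<Rightarrow> nat \<Rightarrow> 'a::euclidean_space \<Rightarrow> real"
    and a b :: "nat \<Rightarrow> nat \<Rightarrow> 'a \<Rightarrow> 'a"
  assumes m1m: "m1 \<le> m"
    and cphi: "\<forall>p\<in>{1..m1}. convex_on UNIV (\<phi> p)"
    and cgh: "\<forall>p\<in>{1..m}. convex_on UNIV (g k p) \<and> convex_on UNIV (h k p)"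
    and lam: "lam > 0"
    and sub: "is_subsol m1 m (Phi m1 \<phi>) g h a b \<alpha>h lam k x0 x1"
    and A6: "assumption6 m1 m (Phi m1 \<phi>) g h a b \<alpha>h lam"
  shows "\<exists>y1 y2 u w. (\<forall>p\<in>{1..m}.
            y1 p \<in> esubdiff (phi_up (Phi m1 \<phi> p)) (f_up g h a \<alpha>h k p x1 x0) \<and>
            y2 p \<in> esubdiff (phi_down (Phi m1 \<phi> p)) (f_lo g h b k p x1 x0) \<and>
            u p \<in> csubdiff (g k p) x1 \<and> w p \<in> csubdiff (h k p) x1) \<and>
          (\<Sum>p\<in>{1..m}. y1 p *\<^sub>R (u p - a k p x0) + y2 p *\<^sub>R (b k p x0 - w p)) + lam *\<^sub>R (x1 - x0) = 0"
proof -
  let ?Ph = "Phi m1 \<phi>"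
  have "\<forall>p\<in>{1..m1}. \<exists>\<Theta>. phi_up (\<lambda>z. ereal (\<phi> p z)) = (\<lambda>z. ereal (fst \<Theta> z)) \<and>
                 phi_down (\<lambda>z. ereal (\<phi> p z)) = (\<lambda>z. ereal (snd \<Theta> z)) \<and>
                 convex_on UNIV (fst \<Theta>) \<and> mono (fst \<Theta>) \<and> convex_on UNIV (snd \<Theta>) \<and>
                 (\<forall>s t. s \<le> t \<longrightarrow> snd \<Theta> t \<le> snd \<Theta> s)"
  proof
    fix p assume p: "p \<in> {1..m1}"
    obtain \<theta>u \<theta>d where th: "phi_up (\<lambda>z. ereal (\<phi> p z)) = (\<lambda>z. ereal (\<theta>u z)) \<and>
                 phi_down (\<lambda>z. ereal (\<phi> p z)) = (\<lambda>z. ereal (\<theta>d z)) \<and>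
                 convex_on UNIV \<theta>u \<and> mono \<theta>u \<and> convex_on UNIV \<theta>d \<and> (\<forall>s t. s \<le> t \<longrightarrow> \<theta>d t \<le> \<theta>d s)"
      using phi_real[of "\<phi> p"] cphi p by blast
    show "\<exists>\<Theta>. phi_up (\<lambda>z. ereal (\<phi> p z)) = (\<lambda>z. ereal (fst \<Theta> z)) \<and>
                 phi_down (\<lambda>z. ereal (\<phi> p z)) = (\<lambda>z. ereal (snd \<Theta> z)) \<and>
                 convex_on UNIV (fst \<Theta>) \<and> mono (fst \<Theta>) \<and> convex_on UNIV (snd \<Theta>) \<and>
                 (\<forall>s t. s \<le> t \<longrightarrow> snd \<Theta> t \<le> snd \<Theta> s)"
      by (rule exI[of _ "(\<theta>u, \<theta>d)"]) (use th in simp)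
  qed
  from bchoice[OF this] obtain \<Theta> where \<Theta>: "\<forall>p\<in>{1..m1}. phi_up (\<lambda>z. ereal (\<phi> p z)) = (\<lambda>z. ereal (fst (\<Theta> p) z)) \<and>
                 phi_down (\<lambda>z. ereal (\<phi> p z)) = (\<lambda>z. ereal (snd (\<Theta> p) z)) \<and>
                 convex_on UNIV (fst (\<Theta> p)) \<and> mono (fst (\<Theta> p)) \<and> convex_on UNIV (snd (\<Theta> p)) \<and>
                 (\<forall>s t. s \<le> t \<longrightarrow> snd (\<Theta> p) t \<le> snd (\<Theta> p) s)" by blast
  define \<theta>u where "\<theta>u p = fst (\<Theta> p)" for p
  define \<theta>d where "\<theta>d p = snd (\<Theta> p)" for p
  define \<theta>r where "\<theta>r p t = \<theta>d p (- t)" for p t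
  have Phi_le: "?Ph p = (\<lambda>z. ereal (\<phi> p z))" if "p \<le> m1" for p using that unfolding Phi_def by simp
  have Phi_gt: "?Ph p = ind_nonpos" if "\<not> p \<le> m1" for p using that unfolding Phi_def by simp
  have up_eq: "phi_up (?Ph p) = (\<lambda>z. ereal (\<theta>u p z))" if "p \<in> {1..m1}" for p
    using \<Theta> that Phi_le[of p] unfolding \<theta>u_def by simp
  have down_eq: "phi_down (?Ph p) = (\<lambda>z. ereal (\<theta>d p z))" if "p \<in> {1..m1}" for p
    using \<Theta> that Phi_le[of p] unfolding \<theta>d_def by simp
  have cu: "convex_on UNIV (\<theta>u p)" "mono (\<theta>u p)" if "p \<in> {1..m1}" for p
    using \<Theta> that unfolding \<theta>u_def by simp_all
  have cd: "convex_on UNIV (\<theta>d p)" "\<forall>s t. s \<le> t \<longrightarrow> \<theta>d p t \<le> \<theta>d p s" if "p \<in> {1..m1}" for p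
    using \<Theta> that unfolding \<theta>d_def by simp_all
  have cr: "convex_on UNIV (\<theta>r p)" "mono (\<theta>r p)" if "p \<in> {1..m1}" for p
  proof -
    show "convex_on UNIV (\<theta>r p)" unfolding \<theta>r_def[abs_def] by (rule convex_on_reflect[OF cd(1)[OF that]])
    show "mono (\<theta>r p)"
    proof (rule monoI)
      fix s t :: real assume "s \<le> t"
      then have "- t \<le> - s" by simp
      then show "\<theta>r p s \<le> \<theta>r p t" unfolding \<theta>r_def using cd(2)[OF that] by blast
    qed
  qed
  define Fu where "Fu p z = f_up g h a \<alpha>h k p z x0" for p z
  define Gl where "Gl p z = h k p z - g k p x0 - inner (b k p x0) (z - x0) + 0" for p z
  have Gl_flo: "Gl p z = - f_lo g h b k p z x0" for p z unfolding Gl_def f_lo_def by simp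
  have cFu: "convex_on UNIV (Fu p)" if "p \<in> {1..m}" for p
  proof -
    have "convex_on UNIV (\<lambda>z. g k p z - h k p x0 - inner (a k p x0) (z - x0) + sigma \<alpha>h k p)"
      using cgh that by (intro convex_on_affine_shift) simp
    then show ?thesis unfolding Fu_def[abs_def] f_up_def .
  qed
  have cGl: "convex_on UNIV (Gl p)" if "p \<in> {1..m}" for p
    unfolding Gl_def[abs_def] using cgh that by (intro convex_on_affine_shift) simp
  define q where "q z = lam / 2 * (norm (z - x0))\<^sup>2" for z
  have cq: "convex_on UNIV q" unfolding q_def[abs_def] using lam
    by (intro convex_on_cmul norm_sq_convex) simp
  define F where "F z = (\<Sum>p\<in>{1..m1}. \<theta>u p (Fu p z) + \<theta>r p (Gl p z)) + q z" for z
  have cF: "convex_on UNIV F"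
  proof -
    have "\<forall>p\<in>{1..m1}. convex_on UNIV (\<lambda>z. \<theta>u p (Fu p z) + \<theta>r p (Gl p z))"
    proof
      fix p assume p: "p \<in> {1..m1}"
      then have pm: "p \<in> {1..m}" using m1m by simp
      have c1: "convex_on UNIV (\<lambda>z. \<theta>u p (Fu p z))"
        by (rule convex_on_compose_mono[OF cu(1)[OF p] cu(2)[OF p] cFu[OF pm]])
      have c2: "convex_on UNIV (\<lambda>z. \<theta>r p (Gl p z))"
        by (rule convex_on_compose_mono[OF cr(1)[OF p] cr(2)[OF p] cGl[OF pm]])
      show "convex_on UNIV (\<lambda>z. \<theta>u p (Fu p z) + \<theta>r p (Gl p z))"
        by (rule convex_on_add[OF c1 c2])
    qed
    then show ?thesis unfolding F_def[abs_def] by (intro convex_on_add convex_on_sumI cq) simp_all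
  qed
  have Fhat_eq: "Fhat ?Ph g h a b \<alpha>h k p z x0 = ereal (\<theta>u p (Fu p z) + \<theta>r p (Gl p z))"
    if "p \<in> {1..m1}" for p z
    unfolding Fhat_def up_eq[OF that] down_eq[OF that] Fu_def \<theta>r_def Gl_flo by simp
  have sumFhat: "(\<Sum>p\<in>{1..m1}. Fhat ?Ph g h a b \<alpha>h k p z x0) = ereal (\<Sum>p\<in>{1..m1}. \<theta>u p (Fu p z) + \<theta>r p (Gl p z))" for z
  proof -
    have "(\<Sum>p\<in>{1..m1}. Fhat ?Ph g h a b \<alpha>h k p z x0) = (\<Sum>p\<in>{1..m1}. ereal (\<theta>u p (Fu p z) + \<theta>r p (Gl p z)))"
      by (rule sum.cong) (simp_all add: Fhat_eq)
    also have "\<dots> = ereal (\<Sum>p\<in>{1..m1}. \<theta>u p (Fu p z) + \<theta>r p (Gl p z))" by (rule sum_ereal)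
    finally show ?thesis .
  qed
  have feas: "\<forall>p\<in>{m1<..m}. Fu p x1 \<le> 0" using sub unfolding is_subsol_def Fu_def by blast
  have opt: "\<forall>z. (\<forall>p\<in>{m1<..m}. Fu p z \<le> 0) \<longrightarrow> F x1 \<le> F z"
  proof (intro allI impI)
    fix z assume "\<forall>p\<in>{m1<..m}. Fu p z \<le> 0"
    then have "(\<Sum>p\<in>{1..m1}. Fhat ?Ph g h a b \<alpha>h k p x1 x0) + ereal (lam / 2 * (norm (x1 - x0))\<^sup>2)
        \<le> (\<Sum>p\<in>{1..m1}. Fhat ?Ph g h a b \<alpha>h k p z x0) + ereal (lam / 2 * (norm (z - x0))\<^sup>2)"
      using sub unfolding is_subsol_def Fu_def by blast
    then show "F x1 \<le> F z" unfolding sumFhat F_def q_def by simp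
  qed
  have cK: "\<forall>p\<in>{m1<..m}. convex_on UNIV (Fu p)" using cFu by simp
  have finK: "finite {m1<..m}" by simp
  from lagrange[OF finK cF cK feas opt] show ?thesis
  proof
    assume "\<exists>\<nu>. (\<forall>k\<in>{m1<..m}. \<nu> k \<ge> 0 \<and> \<nu> k * Fu k x1 = 0) \<and>
             (\<forall>z. F x1 + (\<Sum>k\<in>{m1<..m}. \<nu> k * Fu k x1) \<le> F z + (\<Sum>k\<in>{m1<..m}. \<nu> k * Fu k z))"
    then obtain \<nu> where n1: "\<forall>k\<in>{m1<..m}. \<nu> k \<ge> 0 \<and> \<nu> k * Fu k x1 = 0"
      and n2: "\<forall>z. F x1 + (\<Sum>k\<in>{m1<..m}. \<nu> k * Fu k x1) \<le> F z + (\<Sum>k\<in>{m1<..m}. \<nu> k * Fu k z)" by blast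
    have nu0: "\<forall>p\<in>{m1<..m}. \<nu> p \<ge> 0" using n1 by blast
    have split: "(\<Sum>p\<in>{1..m}. f p) = (\<Sum>p\<in>{1..m1}. f p) + (\<Sum>p\<in>{m1<..m}. f p)" for f :: "nat \<Rightarrow> real"
    proof -
      have "{1..m} = {1..m1} \<union> {m1<..m}" using m1m by auto
      moreover have "{1..m1} \<inter> {m1<..m} = {}" by auto
      ultimately show ?thesis by (simp add: sum.union_disjoint)
    qed
    define G1 where "G1 z = (\<Sum>p\<in>{1..m1}. \<theta>r p (Gl p z)) + q z + (\<Sum>p\<in>{m1<..m}. \<nu> p * Fu p z)" for z
    have e1: "F z + (\<Sum>p\<in>{m1<..m}. \<nu> p * Fu p z) = (\<Sum>p\<in>{1..m1}. \<theta>u p (Fu p z)) + G1 z" for z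
      unfolding F_def G1_def by (simp add: sum.distrib algebra_simps)
    have cnuF: "convex_on UNIV (\<lambda>z. \<Sum>p\<in>{m1<..m}. \<nu> p * Fu p z)"
    proof (rule convex_on_sumI)
      show "\<forall>p\<in>{m1<..m}. convex_on UNIV (\<lambda>z. \<nu> p * Fu p z)"
      proof
        fix p assume p: "p \<in> {m1<..m}"
        then have "p \<in> {1..m}" using m1m by auto
        then show "convex_on UNIV (\<lambda>z. \<nu> p * Fu p z)" using nu0 p cFu by (intro convex_on_cmul) auto
      qed
    qed simp
    have crG: "convex_on UNIV (\<lambda>z. \<Sum>p\<in>{1..m1}. \<theta>r p (Gl p z))"
    proof (rule convex_on_sumI)
      show "\<forall>p\<in>{1..m1}. convex_on UNIV (\<lambda>z. \<theta>r p (Gl p z))"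
      proof
        fix p assume p: "p \<in> {1..m1}"
        then have pm: "p \<in> {1..m}" using m1m by auto
        show "convex_on UNIV (\<lambda>z. \<theta>r p (Gl p z))"
          by (rule convex_on_compose_mono[OF cr(1)[OF p] cr(2)[OF p] cGl[OF pm]])
      qed
    qed simp
    have cG1: "convex_on UNIV G1" unfolding G1_def[abs_def]
      by (intro convex_on_add crG cq cnuF)
    have in1: "\<forall>z. (\<Sum>p\<in>{1..m1}. \<theta>u p (Fu p x1)) + G1 x1 \<le> (\<Sum>p\<in>{1..m1}. \<theta>u p (Fu p z)) + G1 z"
      using n2 unfolding e1 .
    have bu: "\<forall>j\<in>{1..m1}. convex_on UNIV (\<theta>u j) \<and> mono (\<theta>u j) \<and> convex_on UNIV (Fu j)"
      using cu cFu m1m by auto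
    obtain \<mu>u where mu1: "\<forall>j\<in>{1..m1}. \<forall>s. \<theta>u j (Fu j x1) + \<mu>u j * (s - Fu j x1) \<le> \<theta>u j s"
      and mu2: "\<forall>z. (\<Sum>j\<in>{1..m1}. \<mu>u j * Fu j x1) + G1 x1 \<le> (\<Sum>j\<in>{1..m1}. \<mu>u j * Fu j z) + G1 z"
      using chainJ[OF _ bu cG1 in1] by auto
    have mu0: "\<forall>p\<in>{1..m1}. \<mu>u p \<ge> 0"
    proof
      fix p assume p: "p \<in> {1..m1}"
      show "\<mu>u p \<ge> 0" by (rule mono_subgrad_nonneg[OF cu(2)[OF p]]) (use mu1 p in blast)
    qed
    define G2 where "G2 z = (\<Sum>p\<in>{1..m1}. \<mu>u p * Fu p z) + q z + (\<Sum>p\<in>{m1<..m}. \<nu> p * Fu p z)" for z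
    have e2: "(\<Sum>p\<in>{1..m1}. \<mu>u p * Fu p z) + G1 z = (\<Sum>p\<in>{1..m1}. \<theta>r p (Gl p z)) + G2 z" for z
      unfolding G1_def G2_def by (simp add: algebra_simps)
    have cmuF: "convex_on UNIV (\<lambda>z. \<Sum>p\<in>{1..m1}. \<mu>u p * Fu p z)"
    proof (rule convex_on_sumI)
      show "\<forall>p\<in>{1..m1}. convex_on UNIV (\<lambda>z. \<mu>u p * Fu p z)"
      proof
        fix p assume p: "p \<in> {1..m1}"
        then have "p \<in> {1..m}" using m1m by auto
        then show "convex_on UNIV (\<lambda>z. \<mu>u p * Fu p z)" using mu0 p cFu by (intro convex_on_cmul) auto
      qed
    qed simp
    have cG2: "convex_on UNIV G2" unfolding G2_def[abs_def]
      by (intro convex_on_add cmuF cq cnuF)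
    have in2: "\<forall>z. (\<Sum>p\<in>{1..m1}. \<theta>r p (Gl p x1)) + G2 x1 \<le> (\<Sum>p\<in>{1..m1}. \<theta>r p (Gl p z)) + G2 z"
      using mu2 unfolding e2 .
    have bd: "\<forall>j\<in>{1..m1}. convex_on UNIV (\<theta>r j) \<and> mono (\<theta>r j) \<and> convex_on UNIV (Gl j)"
      using cr cGl m1m by auto
    obtain \<mu>d where md1: "\<forall>j\<in>{1..m1}. \<forall>s. \<theta>r j (Gl j x1) + \<mu>d j * (s - Gl j x1) \<le> \<theta>r j s"
      and md2: "\<forall>z. (\<Sum>j\<in>{1..m1}. \<mu>d j * Gl j x1) + G2 x1 \<le> (\<Sum>j\<in>{1..m1}. \<mu>d j * Gl j z) + G2 z"
      using chainJ[OF _ bd cG2 in2] by auto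
    have md0: "\<forall>p\<in>{1..m1}. \<mu>d p \<ge> 0"
    proof
      fix p assume p: "p \<in> {1..m1}"
      show "\<mu>d p \<ge> 0" by (rule mono_subgrad_nonneg[OF cr(2)[OF p]]) (use md1 p in blast)
    qed
    define y1 where "y1 p = (if p \<le> m1 then \<mu>u p else \<nu> p)" for p
    define cc where "cc p = (if p \<le> m1 then \<mu>d p else 0)" for p
    have y10: "\<forall>p\<in>{1..m}. y1 p \<ge> 0 \<and> convex_on UNIV (Fu p)"
      unfolding y1_def using mu0 nu0 cFu by auto
    have cc0: "\<forall>p\<in>{1..m}. cc p \<ge> 0 \<and> convex_on UNIV (Gl p)"
      unfolding cc_def using md0 cGl by auto
    have sy: "(\<Sum>p\<in>{1..m}. y1 p * Fu p z) = (\<Sum>p\<in>{1..m1}. \<mu>u p * Fu p z) + (\<Sum>p\<in>{m1<..m}. \<nu> p * Fu p z)" for z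
    proof -
      have "(\<Sum>p\<in>{1..m1}. y1 p * Fu p z) = (\<Sum>p\<in>{1..m1}. \<mu>u p * Fu p z)"
        by (rule sum.cong) (simp_all add: y1_def)
      moreover have "(\<Sum>p\<in>{m1<..m}. y1 p * Fu p z) = (\<Sum>p\<in>{m1<..m}. \<nu> p * Fu p z)"
        by (rule sum.cong) (simp_all add: y1_def)
      ultimately show ?thesis using split[of "\<lambda>p. y1 p * Fu p z"] by simp
    qed
    have sc: "(\<Sum>p\<in>{1..m}. cc p * Gl p z) = (\<Sum>p\<in>{1..m1}. \<mu>d p * Gl p z)" for z
    proof -
      have "(\<Sum>p\<in>{1..m1}. cc p * Gl p z) = (\<Sum>p\<in>{1..m1}. \<mu>d p * Gl p z)"
        by (rule sum.cong) (simp_all add: cc_def)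
      moreover have "(\<Sum>p\<in>{m1<..m}. cc p * Gl p z) = 0"
        by (rule sum.neutral) (simp add: cc_def)
      ultimately show ?thesis using split[of "\<lambda>p. cc p * Gl p z"] by simp
    qed
    define q1 where "q1 z = (\<Sum>p\<in>{1..m}. cc p * Gl p z) + q z" for z
    have e3: "(\<Sum>p\<in>{1..m}. y1 p * Fu p z) + q1 z = (\<Sum>j\<in>{1..m1}. \<mu>d j * Gl j z) + G2 z" for z
      unfolding q1_def sy sc G2_def by (simp add: algebra_simps)
    have ccG: "convex_on UNIV (\<lambda>z. \<Sum>p\<in>{1..m}. cc p * Gl p z)"
      by (rule convex_on_sumI) (use cc0 in \<open>auto intro!: convex_on_cmul\<close>)
    have cq1: "convex_on UNIV q1" unfolding q1_def[abs_def] by (intro convex_on_add ccG cq)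
    have in3: "\<forall>z. (\<Sum>p\<in>{1..m}. y1 p * Fu p x1) + q1 x1 \<le> (\<Sum>p\<in>{1..m}. y1 p * Fu p z) + q1 z"
      using md2 unfolding e3[symmetric] .
    obtain v v0 where v: "\<forall>p\<in>{1..m}. v p \<in> csubdiff (Fu p) x1" and v0: "v0 \<in> csubdiff q1 x1"
      and vs: "(\<Sum>p\<in>{1..m}. y1 p *\<^sub>R v p) + v0 = 0"
      using sum_rule_fin[OF _ y10 cq1 in3] by auto
    define q2 where "q2 z = q z + inner (- v0) z" for z
    have cq2: "convex_on UNIV q2"
    proof -
      have "convex_on UNIV (\<lambda>z. inner (- v0) z)" using convex_on_linear_fun[of "- v0" 0] by simp
      then show ?thesis unfolding q2_def[abs_def] by (intro convex_on_add cq)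
    qed
    have in4: "\<forall>z. (\<Sum>p\<in>{1..m}. cc p * Gl p x1) + q2 x1 \<le> (\<Sum>p\<in>{1..m}. cc p * Gl p z) + q2 z"
    proof
      fix z
      have "q1 x1 + inner v0 (z - x1) \<le> q1 z" using v0 unfolding csubdiff_def by blast
      then show "(\<Sum>p\<in>{1..m}. cc p * Gl p x1) + q2 x1 \<le> (\<Sum>p\<in>{1..m}. cc p * Gl p z) + q2 z"
        unfolding q1_def q2_def by (simp add: inner_diff_right algebra_simps)
    qed
    obtain w w0 where w: "\<forall>p\<in>{1..m}. w p \<in> csubdiff (Gl p) x1" and w0: "w0 \<in> csubdiff q2 x1"
      and ws: "(\<Sum>p\<in>{1..m}. cc p *\<^sub>R w p) + w0 = 0"
      using sum_rule_fin[OF _ cc0 cq2 in4] by auto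
    have "w0 - (- v0) \<in> csubdiff q x1" using w0 unfolding q2_def[abs_def] by (rule csubdiff_shift)
    then have "w0 + v0 \<in> csubdiff (\<lambda>z. lam / 2 * (norm (z - x0))\<^sup>2) x1" unfolding q_def[abs_def] by simp
    then have wv: "w0 + v0 = lam *\<^sub>R (x1 - x0)" by (rule csubdiff_q[OF lam])
    define y2 where "y2 p = - cc p" for p
    define u where "u p = v p + a k p x0" for p
    define w' where "w' p = w p + b k p x0" for p
    have "\<forall>p\<in>{1..m}.
            y1 p \<in> esubdiff (phi_up (?Ph p)) (f_up g h a \<alpha>h k p x1 x0) \<and>
            y2 p \<in> esubdiff (phi_down (?Ph p)) (f_lo g h b k p x1 x0) \<and>
            u p \<in> csubdiff (g k p) x1 \<and> w' p \<in> csubdiff (h k p) x1"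
    proof
      fix p assume p: "p \<in> {1..m}"
      have "u p \<in> csubdiff (g k p) x1"
        unfolding u_def using v p unfolding Fu_def f_up_def by (intro csubdiff_affine_shift) blast
      moreover have "w' p \<in> csubdiff (h k p) x1"
        unfolding w'_def using w p unfolding Gl_def by (intro csubdiff_affine_shift) blast
      moreover have "y1 p \<in> esubdiff (phi_up (?Ph p)) (f_up g h a \<alpha>h k p x1 x0) \<and>
            y2 p \<in> esubdiff (phi_down (?Ph p)) (f_lo g h b k p x1 x0)"
      proof (cases "p \<le> m1")
        case True
        then have p1: "p \<in> {1..m1}" using p by simp
        have "y1 p \<in> esubdiff (phi_up (?Ph p)) (f_up g h a \<alpha>h k p x1 x0)"
          unfolding up_eq[OF p1] esubdiff_real y1_def using True mu1 p1 unfolding Fu_def by simp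
        moreover have "y2 p \<in> esubdiff (phi_down (?Ph p)) (f_lo g h b k p x1 x0)"
          unfolding down_eq[OF p1] esubdiff_real
        proof (intro CollectI allI)
          fix s
          have "\<theta>r p (Gl p x1) + \<mu>d p * (- s - Gl p x1) \<le> \<theta>r p (- s)" using md1 p1 by blast
          then show "\<theta>d p (f_lo g h b k p x1 x0) + y2 p * (s - f_lo g h b k p x1 x0) \<le> \<theta>d p s"
            unfolding \<theta>r_def Gl_flo y2_def cc_def using True by (simp add: algebra_simps)
        qed
        ultimately show ?thesis by blast
      next
        case False
        have pK: "p \<in> {m1<..m}" using False p by simp
        have "y1 p \<in> esubdiff ind_nonpos (Fu p x1)"
          unfolding y1_def using False esubdiff_ind[of "Fu p x1" "\<nu> p"] feas n1 pK by simp
        moreover have "y2 p \<in> esubdiff (\<lambda>_. 0) (f_lo g h b k p x1 x0)"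
          unfolding esubdiff_zero y2_def cc_def using False by simp
        ultimately show ?thesis unfolding Phi_gt[OF False] phi_up_ind phi_down_ind Fu_def by simp
      qed
      ultimately show "y1 p \<in> esubdiff (phi_up (?Ph p)) (f_up g h a \<alpha>h k p x1 x0) \<and>
            y2 p \<in> esubdiff (phi_down (?Ph p)) (f_lo g h b k p x1 x0) \<and>
            u p \<in> csubdiff (g k p) x1 \<and> w' p \<in> csubdiff (h k p) x1" by blast
    qed
    moreover have "(\<Sum>p\<in>{1..m}. y1 p *\<^sub>R (u p - a k p x0) + y2 p *\<^sub>R (b k p x0 - w' p)) + lam *\<^sub>R (x1 - x0) = 0"
    proof -
      have "(\<Sum>p\<in>{1..m}. y1 p *\<^sub>R (u p - a k p x0) + y2 p *\<^sub>R (b k p x0 - w' p))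
            = (\<Sum>p\<in>{1..m}. y1 p *\<^sub>R v p) + (\<Sum>p\<in>{1..m}. cc p *\<^sub>R w p)"
        unfolding u_def w'_def y2_def by (simp add: sum.distrib)
      then have "(\<Sum>p\<in>{1..m}. y1 p *\<^sub>R (u p - a k p x0) + y2 p *\<^sub>R (b k p x0 - w' p)) + lam *\<^sub>R (x1 - x0)
            = ((\<Sum>p\<in>{1..m}. y1 p *\<^sub>R v p) + (\<Sum>p\<in>{1..m}. cc p *\<^sub>R w p)) + (w0 + v0)"
        unfolding wv by simp
      also have "\<dots> = ((\<Sum>p\<in>{1..m}. y1 p *\<^sub>R v p) + v0) + ((\<Sum>p\<in>{1..m}. cc p *\<^sub>R w p) + w0)"
        by (simp add: algebra_simps)
      also have "\<dots> = 0" unfolding vs ws by simp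
      finally show ?thesis .
    qed
    ultimately show ?thesis by blast
  next
    assume "\<exists>\<nu>. (\<forall>k\<in>{m1<..m}. \<nu> k \<ge> 0 \<and> \<nu> k * Fu k x1 = 0) \<and> (\<exists>k\<in>{m1<..m}. \<nu> k \<noteq> 0) \<and>
             (\<forall>z. (\<Sum>k\<in>{m1<..m}. \<nu> k * Fu k x1) \<le> (\<Sum>k\<in>{m1<..m}. \<nu> k * Fu k z))"
    then obtain \<nu> where n1: "\<forall>k\<in>{m1<..m}. \<nu> k \<ge> 0 \<and> \<nu> k * Fu k x1 = 0"
      and n2: "\<exists>k\<in>{m1<..m}. \<nu> k \<noteq> 0"
      and n3: "\<forall>z. (\<Sum>k\<in>{m1<..m}. \<nu> k * Fu k x1) \<le> (\<Sum>k\<in>{m1<..m}. \<nu> k * Fu k z)" by blast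
    have "\<forall>z. (\<Sum>k\<in>{m1<..m}. \<nu> k * Fu k x1) + 0 \<le> (\<Sum>k\<in>{m1<..m}. \<nu> k * Fu k z) + 0" using n3 by simp
    from sum_rule_fin[of "{m1<..m}" \<nu> Fu "\<lambda>_. 0" x1] this n1 cK obtain v v0 where
      v: "\<forall>i\<in>{m1<..m}. v i \<in> csubdiff (Fu i) x1" and v0: "v0 \<in> csubdiff (\<lambda>_. 0) x1"
      and vs: "(\<Sum>i\<in>{m1<..m}. \<nu> i *\<^sub>R v i) + v0 = 0"
      by (auto simp: convex_on_const)
    have "v0 = 0" using csubdiff_zero_fun[OF v0] .
    then have vs': "(\<Sum>i\<in>{m1<..m}. \<nu> i *\<^sub>R v i) = 0" using vs by simp
    have nc: "\<forall>p\<in>{m1<..m}. \<nu> p \<in> normal_cone {..0} (f_up g h a \<alpha>h k p x1 x0)"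
    proof
      fix p assume p: "p \<in> {m1<..m}"
      have t0: "Fu p x1 \<le> 0" using feas p by blast
      have "\<forall>s\<in>{..0::real}. \<nu> p * (s - Fu p x1) \<le> 0"
      proof
        fix s :: real assume "s \<in> {..0}"
        then have "\<nu> p * s \<le> 0" using n1 p by (simp add: mult_nonneg_nonpos)
        moreover have "\<nu> p * (s - Fu p x1) = \<nu> p * s - \<nu> p * Fu p x1" by (simp add: right_diff_distrib)
        moreover have "\<nu> p * Fu p x1 = 0" using n1 p by blast
        ultimately show "\<nu> p * (s - Fu p x1) \<le> 0" by linarith
      qed
      then show "\<nu> p \<in> normal_cone {..0} (f_up g h a \<alpha>h k p x1 x0)"
        unfolding normal_cone_def Fu_def[symmetric] using t0 by simp
    qed
    have ms: "0 \<in> msum {m1<..m} (\<lambda>p. mscale (\<nu> p) (df_up g a k p x1 x0))"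
    proof -
      have "\<forall>p\<in>{m1<..m}. \<nu> p *\<^sub>R v p \<in> mscale (\<nu> p) (df_up g a k p x1 x0)"
      proof
        fix p assume p: "p \<in> {m1<..m}"
        have "v p + a k p x0 \<in> csubdiff (g k p) x1"
          using v p unfolding Fu_def f_up_def by (intro csubdiff_affine_shift) blast
        then have "v p \<in> df_up g a k p x1 x0" unfolding df_up_def by (rule rev_image_eqI) simp
        then show "\<nu> p *\<^sub>R v p \<in> mscale (\<nu> p) (df_up g a k p x1 x0)" unfolding mscale_def by (rule imageI)
      qed
      then show ?thesis unfolding msum_def using vs' by force
    qed
    have "\<forall>p\<in>{m1<..m}. \<nu> p = 0"
      using A6 sub nc ms unfolding assumption6_def by blast
    then show ?thesis using n2 by blast
  qed
qed



theorem proposition4p8: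
  fixes m1 m :: nat
    and \<phi> :: "nat \<Rightarrow> real \<Rightarrow> real"
    and f :: "nat \<Rightarrow> 'a::euclidean_space \<Rightarrow> real"
    and g h :: "nat \<Rightarrow> nat \<Rightarrow> 'a \<Rightarrow> real"
    and \<alpha>h :: "nat \<Rightarrow> nat \<Rightarrow> real"
    and ell \<epsilon> \<delta> :: "nat \<Rightarrow> real"
    and lam :: real
    and a b :: "nat \<Rightarrow> nat \<Rightarrow> 'a \<Rightarrow> 'a"
    and xs :: "nat \<Rightarrow> 'a" and xi :: "nat \<Rightarrow> nat \<Rightarrow> 'a" and ik :: "nat \<Rightarrow> nat"
    and \<eta> \<beta> :: real and kbar :: nat
  assumes "m1 \<le> m" and "1 \<le> m"
    and "\<forall>p\<in>{1..m1}. convex_on UNIV (\<phi> p)"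
    and "assumption1 m (Phi m1 \<phi>) f g h"
    and "assumption2 m1 m g h \<alpha>h (xs 0)"
    and "assumption3 m g h ell"
    and "assumption4 m (Phi m1 \<phi>) g h"
    and "assumption5 m (Phi m1 \<phi>) f g h"
    and "prox_ADC m1 m (Phi m1 \<phi>) g h a b \<alpha>h lam \<epsilon> \<delta> ell xs xi ik"
    and "assumption6 m1 m (Phi m1 \<phi>) g h a b \<alpha>h lam"
    and "bounded (range xs)"
    and "\<forall>x\<in>(\<Inter>p\<in>{1..m}. domF (Phi m1 \<phi>) f p). \<forall>p\<in>I2 m (Phi m1 \<phi>). hsubdiff_A g h p x = {0}"
    and "\<eta> > 0" and "\<beta> > 0"
  shows "\<exists>k0\<ge>kbar.
           (MAX p\<in>{1..m}. (\<Sum>j. \<alpha>h p (j + k0))) + \<epsilon> k0 \<le> \<beta> \<and>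
           \<delta> k0 / (lam + ell k0) \<le> \<beta> \<and> \<delta> k0 \<le> \<eta> \<and>
           weakly_A_stationary m (Phi m1 \<phi>) g h
             (ereal \<eta> * max 1 (ereal (sqrt (2 * real m)) *
                (SUP k. SUP y\<in>Yset m (Phi m1 \<phi>) g h a b \<alpha>h lam xi ik k. ereal (ynorm m y))))
             \<beta> kbar (xi k0 (Suc (ik k0)))"
proof -
  let ?Ph = "Phi m1 \<phi>"
  have lam: "lam > 0" using assms(9) unfolding prox_ADC_def by blast
  have elim: "\<epsilon> \<longlonglongrightarrow> 0" using assms(9) unfolding prox_ADC_def by blast
  have dpos: "\<forall>k. \<delta> k > 0" using assms(9) unfolding prox_ADC_def by blast
  have dlim: "\<delta> \<longlonglongrightarrow> 0" using assms(9) unfolding prox_ADC_def by blast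
  have dllim: "(\<lambda>k. \<delta> k / (lam + ell k)) \<longlonglongrightarrow> 0" using assms(9) unfolding prox_ADC_def by blast
  have ab: "\<forall>k. \<forall>p\<in>{1..m}. \<forall>y. a k p y \<in> csubdiff (h k p) y \<and> b k p y \<in> csubdiff (g k p) y"
    using assms(9) unfolding prox_ADC_def by blast
  have it: "\<forall>k. (\<forall>i \<le> ik k. is_subsol m1 m ?Ph g h a b \<alpha>h lam k (xi k i) (xi k (Suc i))) \<and>
          inner_stop m ?Ph g h a b \<alpha>h lam \<epsilon> \<delta> ell xi k (ik k)"
    using assms(9) unfolding prox_ADC_def by blast
  have cgh: "\<forall>p\<in>{1..m}. \<forall>k. convex_on UNIV (g k p) \<and> convex_on UNIV (h k p)"
    using assms(4) unfolding assumption1_def by blast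
  have a2a: "\<forall>p\<in>{m1<..m}. (\<forall>k. 0 \<le> \<alpha>h p k) \<and> summable (\<alpha>h p)"
    using assms(5) unfolding assumption2_def by blast
  have a2b: "\<forall>p\<in>{1..m1}. \<forall>k. \<alpha>h p k = 0"
    using assms(5) unfolding assumption2_def by blast
  have ellp: "\<forall>k. ell k > 0" using assms(6) unfolding assumption3_def by blast
  have summ: "summable (\<alpha>h p) \<and> (\<forall>k. 0 \<le> \<alpha>h p k)" if p: "p \<in> {1..m}" for p
  proof (cases "p \<le> m1")
    case True
    then have "\<alpha>h p = (\<lambda>_. 0)" using a2b p by auto
    then show ?thesis by simp
  next
    case False
    then show ?thesis using a2a p by auto
  qed
  have ev1: "\<forall>p\<in>{1..m}. eventually (\<lambda>k. (\<Sum>j. \<alpha>h p (j + k)) < \<beta> / 2) sequentially"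
  proof
    fix p assume p: "p \<in> {1..m}"
    have "(\<lambda>n. \<Sum>j. \<alpha>h p (j + n)) \<longlonglongrightarrow> 0" by (rule suminf_exist_split2) (use summ[OF p] in blast)
    then show "eventually (\<lambda>k. (\<Sum>j. \<alpha>h p (j + k)) < \<beta> / 2) sequentially"
      by (rule order_tendstoD(2)) (use assms(14) in simp)
  qed
  have ev: "eventually (\<lambda>k. kbar \<le> k \<and> (\<forall>p\<in>{1..m}. (\<Sum>j. \<alpha>h p (j + k)) < \<beta> / 2) \<and>
       \<epsilon> k < \<beta> / 2 \<and> \<delta> k / (lam + ell k) < \<beta> \<and> \<delta> k < \<eta>) sequentially"
  proof (intro eventually_conj)
    show "eventually (\<lambda>k. kbar \<le> k) sequentially" by (rule eventually_ge_at_top)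
    show "eventually (\<lambda>k. \<forall>p\<in>{1..m}. (\<Sum>j. \<alpha>h p (j + k)) < \<beta> / 2) sequentially"
      by (rule eventually_ball_finite[OF _ ev1]) simp
    show "eventually (\<lambda>k. \<epsilon> k < \<beta> / 2) sequentially"
      by (rule order_tendstoD(2)[OF elim]) (use assms(14) in simp)
    show "eventually (\<lambda>k. \<delta> k / (lam + ell k) < \<beta>) sequentially"
      by (rule order_tendstoD(2)[OF dllim]) (use assms(14) in simp)
    show "eventually (\<lambda>k. \<delta> k < \<eta>) sequentially"
      by (rule order_tendstoD(2)[OF dlim]) (use assms(13) in simp)
  qed
  then obtain N where "\<forall>n\<ge>N. kbar \<le> n \<and> (\<forall>p\<in>{1..m}. (\<Sum>j. \<alpha>h p (j + n)) < \<beta> / 2) \<and>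
       \<epsilon> n < \<beta> / 2 \<and> \<delta> n / (lam + ell n) < \<beta> \<and> \<delta> n < \<eta>"
    unfolding eventually_sequentially by blast
  then have kN: "kbar \<le> N" and tl: "\<forall>p\<in>{1..m}. (\<Sum>j. \<alpha>h p (j + N)) < \<beta> / 2"
    and eN: "\<epsilon> N < \<beta> / 2" and dN: "\<delta> N / (lam + ell N) < \<beta>" and dN2: "\<delta> N < \<eta>" by auto
  define k0 where "k0 = N"
  have ne: "{1..m} \<noteq> {}" using assms(2) by auto
  have maxb: "(MAX p\<in>{1..m}. (\<Sum>j. \<alpha>h p (j + k0))) \<le> \<beta> / 2"
    unfolding k0_def using tl ne by (intro Max.boundedI) auto
  have sig_le: "(\<Sum>j. \<alpha>h p (j + k0)) \<le> (MAX p\<in>{1..m}. (\<Sum>j. \<alpha>h p (j + k0)))" if "p \<in> {1..m}" for p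
    using that by (intro Max_ge) auto
  have sig_ge: "0 \<le> (\<Sum>j. \<alpha>h p (j + k0))" if p: "p \<in> {1..m}" for p
  proof -
    have "summable (\<lambda>j. \<alpha>h p (j + k0))" using summ[OF p] by (intro summable_ignore_initial_segment) blast
    then show ?thesis using summ[OF p] by (intro suminf_nonneg) auto
  qed
  have c1: "(MAX p\<in>{1..m}. (\<Sum>j. \<alpha>h p (j + k0))) + \<epsilon> k0 \<le> \<beta>" using maxb eN unfolding k0_def by simp
  have c2: "\<delta> k0 / (lam + ell k0) \<le> \<beta>" using dN unfolding k0_def by simp
  have c3: "\<delta> k0 \<le> \<eta>" using dN2 unfolding k0_def by simp
  define x0 where "x0 = xi k0 (ik k0)"
  define x1 where "x1 = xi k0 (Suc (ik k0))"
  have sub: "is_subsol m1 m ?Ph g h a b \<alpha>h lam k0 x0 x1" using it unfolding x0_def x1_def by blast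
  have stop: "inner_stop m ?Ph g h a b \<alpha>h lam \<epsilon> \<delta> ell xi k0 (ik k0)" using it by blast
  have cghk: "\<forall>p\<in>{1..m}. convex_on UNIV (g k0 p) \<and> convex_on UNIV (h k0 p)" using cgh by blast
  obtain y1 y2 u w where Y: "\<forall>p\<in>{1..m}.
            y1 p \<in> esubdiff (phi_up (?Ph p)) (f_up g h a \<alpha>h k0 p x1 x0) \<and>
            y2 p \<in> esubdiff (phi_down (?Ph p)) (f_lo g h b k0 p x1 x0) \<and>
            u p \<in> csubdiff (g k0 p) x1 \<and> w p \<in> csubdiff (h k0 p) x1"
    and Ys: "(\<Sum>p\<in>{1..m}. y1 p *\<^sub>R (u p - a k0 p x0) + y2 p *\<^sub>R (b k0 p x0 - w p)) + lam *\<^sub>R (x1 - x0) = 0"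
    using kkt_main[OF assms(1) assms(3) cghk lam sub assms(10)] by blast
  have st1: "\<forall>p\<in>{1..m}. f_up g h a \<alpha>h k0 p x1 x0 \<le> fk g h k0 p x1 + sigma \<alpha>h k0 p + \<epsilon> k0"
    using stop unfolding inner_stop_def x0_def x1_def by blast
  have st2: "\<forall>p\<in>I2 m ?Ph. f_lo g h b k0 p x1 x0 \<ge> fk g h k0 p x1 - \<epsilon> k0"
    using stop unfolding inner_stop_def x0_def x1_def by blast
  have st3: "norm (x1 - x0) \<le> \<delta> k0 / (lam + ell k0)"
    using stop unfolding inner_stop_def x0_def x1_def by blast
  have dx: "norm (x0 - x1) \<le> \<beta>" using st3 c2 by (simp add: norm_minus_commute)
  have esb: "y \<in> esubdiff_beta \<psi> \<beta> t" if "y \<in> esubdiff \<psi> z" "\<bar>z - t\<bar> \<le> \<beta>" for y \<psi> z t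
    unfolding esubdiff_beta_def using that by blast
  have csb: "v \<in> csubdiff_beta f \<beta> x" if "v \<in> csubdiff f z" "norm (z - x) \<le> \<beta>" for v f z x
    unfolding csubdiff_beta_def using that by blast
  define S where "S p = (let A = mdiff (csubdiff_beta (g k0 p) \<beta> x1) (csubdiff_beta (h k0 p) \<beta> x1) in
       \<Union>{ {y1 *\<^sub>R u1 + y2 *\<^sub>R u2 | u1 u2. u1 \<in> A \<and> u2 \<in> A} | y1 y2.
            y1 \<in> esubdiff_beta (phi_up (?Ph p)) \<beta> (fk g h k0 p x1) \<and>
            y2 \<in> esubdiff_beta (phi_down (?Ph p)) \<beta> (fk g h k0 p x1)})" for p
  define e where "e p = y1 p *\<^sub>R (u p - a k0 p x0) + y2 p *\<^sub>R (b k0 p x0 - w p)" for p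
  have eS: "e p \<in> S p" if p: "p \<in> {1..m}" for p
  proof -
    define A where "A = mdiff (csubdiff_beta (g k0 p) \<beta> x1) (csubdiff_beta (h k0 p) \<beta> x1)"
    have Yp: "y1 p \<in> esubdiff (phi_up (?Ph p)) (f_up g h a \<alpha>h k0 p x1 x0)"
      "y2 p \<in> esubdiff (phi_down (?Ph p)) (f_lo g h b k0 p x1 x0)"
      "u p \<in> csubdiff (g k0 p) x1" "w p \<in> csubdiff (h k0 p) x1" using Y p by auto
    have ap: "a k0 p x0 \<in> csubdiff (h k0 p) x0" and bp: "b k0 p x0 \<in> csubdiff (g k0 p) x0"
      using ab p by auto
    have u1: "u p - a k0 p x0 \<in> A" unfolding A_def mdiff_def
      using csb[OF Yp(3), of x1] csb[OF ap dx] assms(14) by auto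
    have u2: "b k0 p x0 - w p \<in> A" unfolding A_def mdiff_def
      using csb[OF Yp(4), of x1] csb[OF bp dx] assms(14) by auto
    have sg: "sigma \<alpha>h k0 p = (\<Sum>j. \<alpha>h p (j + k0))" unfolding sigma_def by simp
    have fu1: "fk g h k0 p x1 + sigma \<alpha>h k0 p \<le> f_up g h a \<alpha>h k0 p x1 x0"
    proof -
      have "h k0 p x0 + inner (a k0 p x0) (x1 - x0) \<le> h k0 p x1" using ap unfolding csubdiff_def by blast
      then show ?thesis unfolding fk_def f_up_def by simp
    qed
    have fu2: "f_up g h a \<alpha>h k0 p x1 x0 \<le> fk g h k0 p x1 + sigma \<alpha>h k0 p + \<epsilon> k0" using st1 p by blast
    have "\<bar>f_up g h a \<alpha>h k0 p x1 x0 - fk g h k0 p x1\<bar> \<le> \<beta>"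
      using fu1 fu2 sig_ge[OF p] sig_le[OF p] c1 unfolding sg by linarith
    then have Y1: "y1 p \<in> esubdiff_beta (phi_up (?Ph p)) \<beta> (fk g h k0 p x1)" by (rule esb[OF Yp(1)])
    have Y2: "y2 p \<in> esubdiff_beta (phi_down (?Ph p)) \<beta> (fk g h k0 p x1)"
    proof (cases "p \<in> I2 m ?Ph")
      case True
      have fl1: "f_lo g h b k0 p x1 x0 \<le> fk g h k0 p x1"
      proof -
        have "g k0 p x0 + inner (b k0 p x0) (x1 - x0) \<le> g k0 p x1" using bp unfolding csubdiff_def by blast
        then show ?thesis unfolding fk_def f_lo_def by simp
      qed
      have fl2: "f_lo g h b k0 p x1 x0 \<ge> fk g h k0 p x1 - \<epsilon> k0" using st2 True by blast
      have "\<bar>f_lo g h b k0 p x1 x0 - fk g h k0 p x1\<bar> \<le> \<beta>"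
        using fl1 fl2 sig_ge[OF p] sig_le[OF p] c1 by linarith
      then show ?thesis by (rule esb[OF Yp(2)])
    next
      case False
      then have "nondecr (?Ph p)" using p unfolding I2_def I1_def by blast
      then have pd: "phi_down (?Ph p) = (\<lambda>_. 0)" unfolding phi_down_def by simp
      have "y2 p \<in> esubdiff (phi_down (?Ph p)) (fk g h k0 p x1)"
        using Yp(2) unfolding pd esubdiff_zero .
      then show ?thesis by (rule esb) (use assms(14) in simp)
    qed
    have "e p \<in> {y1 p *\<^sub>R u1 + y2 p *\<^sub>R u2 | u1 u2. u1 \<in> A \<and> u2 \<in> A}"
      unfolding e_def using u1 u2 by blast
    moreover have "{y1 p *\<^sub>R u1 + y2 p *\<^sub>R u2 | u1 u2. u1 \<in> A \<and> u2 \<in> A} \<in>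
       { {y1 *\<^sub>R u1 + y2 *\<^sub>R u2 | u1 u2. u1 \<in> A \<and> u2 \<in> A} | y1 y2.
            y1 \<in> esubdiff_beta (phi_up (?Ph p)) \<beta> (fk g h k0 p x1) \<and>
            y2 \<in> esubdiff_beta (phi_down (?Ph p)) \<beta> (fk g h k0 p x1)}"
      using Y1 Y2 by blast
    ultimately show ?thesis unfolding S_def A_def[symmetric] Let_def by (rule UnionI[rotated])
  qed
  define M where "M = msum {1..m} S"
  have sM: "sum e {1..m} \<in> M" unfolding M_def msum_def using eS by blast
  have se: "sum e {1..m} = - (lam *\<^sub>R (x1 - x0))" using Ys unfolding e_def by (simp add: eq_neg_iff_add_eq_0)
  have "norm (sum e {1..m}) = lam * norm (x1 - x0)" unfolding se using lam by simp
  also have "\<dots> \<le> lam * (\<delta> k0 / (lam + ell k0))" using st3 lam by (intro mult_left_mono) auto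
  also have "\<dots> \<le> \<delta> k0"
  proof -
    have lp: "lam + ell k0 > 0" using lam ellp by (simp add: add_pos_pos)
    have "0 < \<delta> k0 * ell k0" using ellp dpos by simp
    then have "lam * \<delta> k0 \<le> \<delta> k0 * (lam + ell k0)" by (simp add: algebra_simps)
    then show ?thesis using lp by (simp add: field_simps)
  qed
  finally have nb: "norm (sum e {1..m}) \<le> \<eta>" using c3 by simp
  have "M \<noteq> {}" using sM by blast
  then have "dist0 M = ereal (infdist 0 M)" unfolding dist0_def by simp
  also have "infdist 0 M \<le> dist 0 (sum e {1..m})" by (rule infdist_le[OF sM])
  then have "ereal (infdist 0 M) \<le> ereal \<eta>" using nb by (simp add: dist_norm)
  finally have d1: "dist0 M \<le> ereal \<eta>" .
  have "ereal \<eta> = ereal \<eta> * 1" by simp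
  also have "\<dots> \<le> ereal \<eta> * max 1 (ereal (sqrt (2 * real m)) *
                (SUP k. SUP y\<in>Yset m (Phi m1 \<phi>) g h a b \<alpha>h lam xi ik k. ereal (ynorm m y)))"
    using assms(13) by (intro ereal_mult_left_mono) auto
  finally have d2: "dist0 M \<le> ereal \<eta> * max 1 (ereal (sqrt (2 * real m)) *
                (SUP k. SUP y\<in>Yset m (Phi m1 \<phi>) g h a b \<alpha>h lam xi ik k. ereal (ynorm m y)))"
    using d1 by (rule order_trans[rotated])
  have "weakly_A_stationary m (Phi m1 \<phi>) g h
             (ereal \<eta> * max 1 (ereal (sqrt (2 * real m)) *
                (SUP k. SUP y\<in>Yset m (Phi m1 \<phi>) g h a b \<alpha>h lam xi ik k. ereal (ynorm m y))))
             \<beta> kbar (xi k0 (Suc (ik k0)))"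
    unfolding weakly_A_stationary_def
    using d2 kN unfolding M_def S_def x1_def k0_def by blast
  then show ?thesis using c1 c2 c3 kN unfolding k0_def by blast
qed


end
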